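(* Let $0\le d\le r\le\min\{m,n\}$. If the $\mathfrak{S}_n\times\mathfrak{S}_m$-irreducible $V^\lambda\otimes V^\mu$ occurs in $R(\mathcal{Z}_{n,m,r})_d$, then $\lambda_1\le n+m-d-r$ and $\mu_1\le n+m-d-r$.
   Context: Fix positive integers $n,m$. $\mathbb{C}[\mathbf{x}_{n\times m}]$ is the polynomial ring in variables $x_{i,j}$; $\mathfrak{S}_n\times\mathfrak{S}_m$ acts by $(g,h)\cdot x_{i,j}=x_{g(i),h(j)}$ (permuting rows and columns of matrices). For finite stable $\mathcal{Z}\subseteq\mathrm{Mat}_{n\times m}(\mathbb{C})$, $R(\mathcal{Z})=\mathbb{C}[\mathbf{x}_{n\times m}]/\mathrm{gr}\,\mathbf{I}(\mathcal{Z})$, where $\mathbf{I}(\mathcal{Z})$ is the vanishing ideal and $\mathrm{gr}$ takes the ideal generated by top-degree homogeneous components of nonzero elements; it is a graded $\mathfrak{S}_n\times\mathfrak{S}_m$-module with components $R(\mathcal{Z})_d$. $\mathcal{Z}_{n,m,r}$ is the set of $n\times m$ $0/1$ matrices with exactly $r$ ones and at most one $1$ in each row and each column (rook placements with $r$ rooks). $V^\lambda$ denotes the Specht module indexed by $\lambda$. *)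

theory Defs
  imports Complex_Main "HOL-Library.Poly_Mapping" "HOL-Combinatorics.Permutations"
begin

type_synonym mono = "(nat \<times> nat) \<Rightarrow>\<^sub>0 nat"
type_synonym cpoly = "mono \<Rightarrow>\<^sub>0 complex"

definition polys :: "nat \<Rightarrow> nat \<Rightarrow> cpoly set" where
  "polys n m = Collect (\<lambda>p::cpoly. \<forall>a\<in>Poly_Mapping.keys p. \<forall>v\<in>Poly_Mapping.keys a. fst v < n \<and> snd v < m)"

definition mdeg :: "mono \<Rightarrow> nat" where
  "mdeg a = (\<Sum>v\<in>Poly_Mapping.keys a. Poly_Mapping.lookup a v)"

definition peval :: "(nat \<Rightarrow> nat \<Rightarrow> complex) \<Rightarrow> cpoly \<Rightarrow> complex" where
  "peval A p = (\<Sum>a\<in>Poly_Mapping.keys p. Poly_Mapping.lookup p a * (\<Prod>v\<in>Poly_Mapping.keys a. A (fst v) (snd v) ^ Poly_Mapping.lookup a v))"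

definition smult :: "complex \<Rightarrow> cpoly \<Rightarrow> cpoly" where
  "smult c p = Poly_Mapping.map (\<lambda>x. c * x) p"

definition tdeg :: "cpoly \<Rightarrow> nat" where
  "tdeg p = Max (mdeg ` Poly_Mapping.keys p)"

definition top_comp :: "cpoly \<Rightarrow> cpoly" where
  "top_comp p = Abs_poly_mapping (\<lambda>a. if mdeg a = tdeg p then Poly_Mapping.lookup p a else 0)"

definition vanishing_ideal :: "nat \<Rightarrow> nat \<Rightarrow> (nat \<Rightarrow> nat \<Rightarrow> complex) set \<Rightarrow> cpoly set" where
  "vanishing_ideal n m Z = {p \<in> polys n m. \<forall>A\<in>Z. peval A p = 0}"

definition gen_ideal :: "nat \<Rightarrow> nat \<Rightarrow> cpoly set \<Rightarrow> cpoly set" where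
  "gen_ideal n m S = {q. \<exists>F c. finite F \<and> F \<subseteq> S \<and> (\<forall>g\<in>F. c g \<in> polys n m) \<and>
                             q = (\<Sum>g\<in>F. c g * g)}"

definition gr_ideal :: "nat \<Rightarrow> nat \<Rightarrow> cpoly set \<Rightarrow> cpoly set" where
  "gr_ideal n m I = gen_ideal n m {top_comp p | p. p \<in> I \<and> p \<noteq> 0}"

definition homog :: "nat \<Rightarrow> nat \<Rightarrow> nat \<Rightarrow> cpoly set" where
  "homog n m d = {p \<in> polys n m. \<forall>a\<in>Poly_Mapping.keys p. mdeg a = d}"

text \<open>action of (g,h) in S_n x S_m: x_(i,j) goes to x_(g i, h j)\<close>
definition mono_ren :: "(nat \<Rightarrow> nat) \<Rightarrow> (nat \<Rightarrow> nat) \<Rightarrow> mono \<Rightarrow> mono" where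
  "mono_ren g h b = Abs_poly_mapping (\<lambda>(i,j). Poly_Mapping.lookup b (g i, h j))"

definition pact :: "(nat \<Rightarrow> nat) \<Rightarrow> (nat \<Rightarrow> nat) \<Rightarrow> cpoly \<Rightarrow> cpoly" where
  "pact g h p = Abs_poly_mapping (\<lambda>b. Poly_Mapping.lookup p (mono_ren g h b))"

definition rook_placements :: "nat \<Rightarrow> nat \<Rightarrow> nat \<Rightarrow> (nat \<Rightarrow> nat \<Rightarrow> complex) set" where
  "rook_placements n m r = {A.
      (\<forall>i j. A i j \<in> {0, 1}) \<and> (\<forall>i j. (i \<ge> n \<or> j \<ge> m) \<longrightarrow> A i j = 0) \<and>
      card {(i,j). i < n \<and> j < m \<and> A i j = 1} = r \<and>
      (\<forall>i j j'. A i j = 1 \<and> A i j' = 1 \<longrightarrow> j = j') \<and>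
      (\<forall>i i' j. A i j = 1 \<and> A i' j = 1 \<longrightarrow> i = i')}"

definition is_partition :: "nat \<Rightarrow> nat list \<Rightarrow> bool" where
  "is_partition n la \<longleftrightarrow> (\<forall>x\<in>set la. 0 < x) \<and> sorted_wrt (\<ge>) la \<and> sum_list la = n"

definition young_diagram :: "nat list \<Rightarrow> (nat \<times> nat) set" where
  "young_diagram la = {(i,j). i < length la \<and> j < la ! i}"

definition tableau :: "nat \<Rightarrow> nat list \<Rightarrow> (nat \<times> nat \<Rightarrow> nat) \<Rightarrow> bool" where
  "tableau n la T \<longleftrightarrow> bij_betw T (young_diagram la) {..<n}"

definition cell_of :: "nat list \<Rightarrow> (nat \<times> nat \<Rightarrow> nat) \<Rightarrow> nat \<Rightarrow> nat \<times> nat" where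
  "cell_of la T = inv_into (young_diagram la) T"

text \<open>tabloids are encoded as row-assignment functions (entries >= n sent to row 0)\<close>
definition tabloid_of :: "nat \<Rightarrow> nat list \<Rightarrow> (nat \<times> nat \<Rightarrow> nat) \<Rightarrow> (nat \<Rightarrow> nat)" where
  "tabloid_of n la T = (\<lambda>i. if i < n then fst (cell_of la T i) else 0)"

definition col_group :: "nat \<Rightarrow> nat list \<Rightarrow> (nat \<times> nat \<Rightarrow> nat) \<Rightarrow> (nat \<Rightarrow> nat) set" where
  "col_group n la T = {p. p permutes {..<n} \<and>
       (\<forall>i<n. snd (cell_of la T (p i)) = snd (cell_of la T i))}"

text \<open>polytabloid e_T = sum over column stabilizer of sgn(p) {p T}, as an element of
  the permutation module M^la = functions from tabloids to C\<close>
definition polytabloid :: "nat \<Rightarrow> nat list \<Rightarrow> (nat \<times> nat \<Rightarrow> nat) \<Rightarrow> (nat \<Rightarrow> nat) \<Rightarrow> complex" where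
  "polytabloid n la T = (\<lambda>t. \<Sum>p\<in>col_group n la T.
       if t = tabloid_of n la T \<circ> inv p then of_int (sign p) else 0)"

definition cspan :: "('a \<Rightarrow> complex) set \<Rightarrow> ('a \<Rightarrow> complex) set" where
  "cspan S = {f. \<exists>F c. finite F \<and> F \<subseteq> S \<and> f = (\<lambda>x. \<Sum>g\<in>F. c g * g x)}"

text \<open>V^la (x) V^mu realized inside M^la (x) M^mu = functions on pairs of tabloids\<close>
definition specht_pair :: "nat \<Rightarrow> nat \<Rightarrow> nat list \<Rightarrow> nat list
     \<Rightarrow> ((nat \<Rightarrow> nat) \<times> (nat \<Rightarrow> nat) \<Rightarrow> complex) set" where
  "specht_pair n m la mu = cspan {(\<lambda>(t,u). polytabloid n la T t * polytabloid m mu U u) | T U.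
        tableau n la T \<and> tableau m mu U}"

definition wact :: "(nat \<Rightarrow> nat) \<Rightarrow> (nat \<Rightarrow> nat) \<Rightarrow> ((nat \<Rightarrow> nat) \<times> (nat \<Rightarrow> nat) \<Rightarrow> complex)
      \<Rightarrow> ((nat \<Rightarrow> nat) \<times> (nat \<Rightarrow> nat) \<Rightarrow> complex)" where
  "wact g h F = (\<lambda>(t,u). F (t \<circ> g, u \<circ> h))"

text \<open>R(Z)_d = homog d / (gr I(Z) intersected with homog d).  V^la (x) V^mu occurs in R(Z)_d
  iff there is an injective S_n x S_m-equivariant linear map V^la (x) V^mu -> R(Z)_d;
  such a map is given by a linear lift phi into the homogeneous degree-d polynomials,
  equivariant and injective modulo the degree-d part J of gr I(Z).\<close>
definition occurs_in_R :: "nat \<Rightarrow> nat \<Rightarrow> (nat \<Rightarrow> nat \<Rightarrow> complex) set \<Rightarrow> nat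
      \<Rightarrow> nat list \<Rightarrow> nat list \<Rightarrow> bool" where
  "occurs_in_R n m Z d la mu \<longleftrightarrow>
    (let W = specht_pair n m la mu;
         J = gr_ideal n m (vanishing_ideal n m Z) \<inter> homog n m d in
     \<exists>phi. (\<forall>w\<in>W. phi w \<in> homog n m d) \<and>
       (\<forall>x\<in>W. \<forall>y\<in>W. \<forall>a b. phi (\<lambda>z. a * x z + b * y z) = smult a (phi x) + smult b (phi y)) \<and>
       (\<forall>g h. g permutes {..<n} \<and> h permutes {..<m} \<longrightarrow>
          (\<forall>w\<in>W. phi (wact g h w) - pact g h (phi w) \<in> J)) \<and>
       (\<forall>w\<in>W. phi w \<in> J \<longrightarrow> w = (\<lambda>_. 0)))"

end

theory Submission
  imports Defs
begin


definition mev :: "(nat \<Rightarrow> nat \<Rightarrow> complex) \<Rightarrow> mono \<Rightarrow> complex" where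
  "mev A a = (\<Prod>v\<in>Poly_Mapping.keys a. A (fst v) (snd v) ^ Poly_Mapping.lookup a v)"

lemma peval_mev: "peval A p = (\<Sum>a\<in>Poly_Mapping.keys p. Poly_Mapping.lookup p a * mev A a)"
  unfolding peval_def mev_def by simp

lemma mev_superset:
  assumes "finite V" "Poly_Mapping.keys a \<subseteq> V"
  shows "mev A a = (\<Prod>v\<in>V. A (fst v) (snd v) ^ Poly_Mapping.lookup a v)"
  unfolding mev_def
  by (rule prod.mono_neutral_left[OF assms(1,2)]) (auto simp: in_keys_iff)

lemma mdeg_superset:
  assumes "finite V" "Poly_Mapping.keys a \<subseteq> V"
  shows "mdeg a = (\<Sum>v\<in>V. Poly_Mapping.lookup a v)"
  unfolding mdeg_def
  by (rule sum.mono_neutral_left[OF assms(1,2)]) (auto simp: in_keys_iff)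

lemma keys_add_sub: "Poly_Mapping.keys (a + b) \<subseteq> Poly_Mapping.keys a \<union> Poly_Mapping.keys b"
  by (auto simp: in_keys_iff lookup_add)

lemma keys_add_nat: "Poly_Mapping.keys (a + b) = Poly_Mapping.keys a \<union> Poly_Mapping.keys (b :: 'x \<Rightarrow>\<^sub>0 nat)"
  by (auto simp: in_keys_iff lookup_add)

lemma mev_add: "mev A (a + b) = mev A a * mev A b"
proof -
  let ?V = "Poly_Mapping.keys a \<union> Poly_Mapping.keys b"
  have f: "finite ?V" by simp
  show ?thesis
    using mev_superset[OF f, of "a+b" A] mev_superset[OF f, of a A] mev_superset[OF f, of b A]
    by (simp add: keys_add_nat lookup_add power_add prod.distrib)
qed

lemma mdeg_add: "mdeg (a + b) = mdeg a + mdeg b"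
proof -
  let ?V = "Poly_Mapping.keys a \<union> Poly_Mapping.keys b"
  have f: "finite ?V" by simp
  show ?thesis
    using mdeg_superset[OF f, of "a+b"] mdeg_superset[OF f, of a] mdeg_superset[OF f, of b]
    by (simp add: keys_add_nat lookup_add sum.distrib)
qed

lemma mev_zero [simp]: "mev A 0 = 1" by (simp add: mev_def)
lemma mdeg_zero [simp]: "mdeg 0 = 0" by (simp add: mdeg_def)

lemma peval_superset:
  assumes "finite X" "Poly_Mapping.keys p \<subseteq> X"
  shows "peval A p = (\<Sum>a\<in>X. Poly_Mapping.lookup p a * mev A a)"
  unfolding peval_mev
  by (rule sum.mono_neutral_left[OF assms(1,2)]) (auto simp: in_keys_iff)

lemma peval_add: "peval A (p + q) = peval A p + peval A q"
proof -
  let ?X = "Poly_Mapping.keys p \<union> Poly_Mapping.keys q"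
  have f: "finite ?X" by simp
  show ?thesis
    using peval_superset[OF f, of "p+q" A] peval_superset[OF f, of p A] peval_superset[OF f, of q A]
      keys_add_sub[of p q]
    by (simp add: lookup_add sum.distrib distrib_right)
qed

lemma peval_zero [simp]: "peval A 0 = 0" by (simp add: peval_def)

lemma peval_sum: "finite I \<Longrightarrow> peval A (\<Sum>i\<in>I. p i) = (\<Sum>i\<in>I. peval A (p i))"
  by (induction I rule: finite_induct) (auto simp: peval_add)

lemma keys_diff_sub: "Poly_Mapping.keys (p - q) \<subseteq> Poly_Mapping.keys p \<union> Poly_Mapping.keys (q::cpoly)"
  by (auto simp: in_keys_iff lookup_minus)

lemma peval_diff: "peval A (p - q) = peval A p - peval A q"
proof -
  let ?X = "Poly_Mapping.keys p \<union> Poly_Mapping.keys q"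
  have f: "finite ?X" by simp
  show ?thesis
    using peval_superset[OF f, of "p-q" A] peval_superset[OF f, of p A] peval_superset[OF f, of q A]
      keys_diff_sub[of p q]
    by (simp add: lookup_minus sum_subtractf left_diff_distrib)
qed

section \<open>Low-degree functions on a point set\<close>

definition inrange :: "nat \<Rightarrow> nat \<Rightarrow> mono \<Rightarrow> bool" where
  "inrange n m a \<longleftrightarrow> (\<forall>v\<in>Poly_Mapping.keys a. fst v < n \<and> snd v < m)"

definition lowfun :: "(nat \<Rightarrow> nat \<Rightarrow> complex) set \<Rightarrow> nat \<Rightarrow> nat \<Rightarrow> nat
    \<Rightarrow> ((nat \<Rightarrow> nat \<Rightarrow> complex) \<Rightarrow> complex) \<Rightarrow> bool" where
  "lowfun Z n m k F \<longleftrightarrow> (\<exists>M c. finite M \<and> (\<forall>a\<in>M. mdeg a \<le> k \<and> inrange n m a) \<and>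
      (\<forall>A\<in>Z. F A = (\<Sum>a\<in>M. c a * mev A a)))"

lemma lowfun_cong: "lowfun Z n m k F \<Longrightarrow> (\<And>A. A \<in> Z \<Longrightarrow> F A = G A) \<Longrightarrow> lowfun Z n m k G"
  unfolding lowfun_def by metis

lemma lowfun_mono: "lowfun Z n m k F \<Longrightarrow> k \<le> k' \<Longrightarrow> lowfun Z n m k' F"
  unfolding lowfun_def by (meson order_trans)

lemma lowfun_const: "lowfun Z n m k (\<lambda>A. c)"
  unfolding lowfun_def
  by (rule exI[of _ "{0}"], rule exI[of _ "\<lambda>_. c"]) (simp add: inrange_def)

lemma lowfun_var: "i < n \<Longrightarrow> j < m \<Longrightarrow> lowfun Z n m 1 (\<lambda>A. A i j)"
  unfolding lowfun_def
  apply (rule exI[of _ "{Poly_Mapping.single (i,j) 1}"], rule exI[of _ "\<lambda>_. 1"])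
  apply (simp add: inrange_def mdeg_def mev_def)
  done

lemma lowfun_scale: "lowfun Z n m k F \<Longrightarrow> lowfun Z n m k (\<lambda>A. s * F A)"
  unfolding lowfun_def
  apply (elim exE conjE)
  subgoal for M c
    by (rule exI[of _ M], rule exI[of _ "\<lambda>a. s * c a"]) (simp add: sum_distrib_left mult.assoc)
  done

lemma lowfun_add: "lowfun Z n m k F \<Longrightarrow> lowfun Z n m k G \<Longrightarrow> lowfun Z n m k (\<lambda>A. F A + G A)"
  unfolding lowfun_def
proof (elim exE conjE)
  fix M1 c1 M2 c2
  assume h: "finite M1" "\<forall>a\<in>M1. mdeg a \<le> k \<and> inrange n m a" "\<forall>A\<in>Z. F A = (\<Sum>a\<in>M1. c1 a * mev A a)"
     "finite M2" "\<forall>a\<in>M2. mdeg a \<le> k \<and> inrange n m a" "\<forall>A\<in>Z. G A = (\<Sum>a\<in>M2. c2 a * mev A a)"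
  let ?c = "\<lambda>a. (if a \<in> M1 then c1 a else 0) + (if a \<in> M2 then c2 a else 0)"
  have "\<forall>A\<in>Z. F A + G A = (\<Sum>a\<in>M1\<union>M2. ?c a * mev A a)"
  proof
    fix A assume "A \<in> Z"
    have e1: "(\<Sum>a\<in>M1\<union>M2. (if a \<in> M1 then c1 a else 0) * mev A a) = (\<Sum>a\<in>M1. c1 a * mev A a)"
      using h(1,4) by (intro sum.mono_neutral_cong_right) auto
    have e2: "(\<Sum>a\<in>M1\<union>M2. (if a \<in> M2 then c2 a else 0) * mev A a) = (\<Sum>a\<in>M2. c2 a * mev A a)"
      using h(1,4) by (intro sum.mono_neutral_cong_right) auto
    show "F A + G A = (\<Sum>a\<in>M1\<union>M2. ?c a * mev A a)"
      using e1 e2 h `A \<in> Z` by (simp add: distrib_right sum.distrib)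
  qed
  then show "\<exists>M c. finite M \<and> (\<forall>a\<in>M. mdeg a \<le> k \<and> inrange n m a) \<and> (\<forall>A\<in>Z. F A + G A = (\<Sum>a\<in>M. c a * mev A a))"
    using h by (intro exI[of _ "M1 \<union> M2"] exI[of _ ?c]) auto
qed

lemma lowfun_sum: "finite I \<Longrightarrow> (\<And>i. i \<in> I \<Longrightarrow> lowfun Z n m k (F i)) \<Longrightarrow> lowfun Z n m k (\<lambda>A. \<Sum>i\<in>I. F i A)"
proof (induction I rule: finite_induct)
  case empty then show ?case using lowfun_const[of Z n m k 0] by simp
next
  case (insert x I)
  then show ?case using lowfun_add[of Z n m k "F x" "\<lambda>A. \<Sum>i\<in>I. F i A"] by simp
qed

lemma lowfun_mult: "lowfun Z n m k F \<Longrightarrow> lowfun Z n m l G \<Longrightarrow> lowfun Z n m (k + l) (\<lambda>A. F A * G A)"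
  unfolding lowfun_def
proof (elim exE conjE)
  fix M1 c1 M2 c2
  assume h: "finite M1" "\<forall>a\<in>M1. mdeg a \<le> k \<and> inrange n m a" "\<forall>A\<in>Z. F A = (\<Sum>a\<in>M1. c1 a * mev A a)"
     "finite M2" "\<forall>a\<in>M2. mdeg a \<le> l \<and> inrange n m a" "\<forall>A\<in>Z. G A = (\<Sum>a\<in>M2. c2 a * mev A a)"
  let ?h = "\<lambda>(a::mono,b). a + b"
  let ?M = "?h ` (M1 \<times> M2)"
  let ?c = "\<lambda>e. \<Sum>x\<in>{x\<in>M1\<times>M2. ?h x = e}. c1 (fst x) * c2 (snd x)"
  have fin: "finite (M1 \<times> M2)" using h by simp
  have "\<forall>A\<in>Z. F A * G A = (\<Sum>e\<in>?M. ?c e * mev A e)"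
  proof
    fix A assume "A \<in> Z"
    have "F A * G A = (\<Sum>a\<in>M1. \<Sum>b\<in>M2. (c1 a * mev A a) * (c2 b * mev A b))"
      using h `A \<in> Z` by (simp add: sum_product)
    also have "\<dots> = (\<Sum>x\<in>M1\<times>M2. c1 (fst x) * c2 (snd x) * mev A (?h x))"
      by (simp add: sum.cartesian_product case_prod_beta mev_add mult_ac)
    also have "\<dots> = (\<Sum>e\<in>?M. \<Sum>x\<in>{x\<in>M1\<times>M2. ?h x = e}. c1 (fst x) * c2 (snd x) * mev A (?h x))"
      by (rule sum.image_gen[OF fin])
    also have "\<dots> = (\<Sum>e\<in>?M. ?c e * mev A e)"
      by (intro sum.cong refl) (simp add: sum_distrib_right)
    finally show "F A * G A = (\<Sum>e\<in>?M. ?c e * mev A e)" .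
  qed
  moreover have "\<forall>e\<in>?M. mdeg e \<le> k + l \<and> inrange n m e"
    using h(2,5) keys_add_nat by (fastforce simp: mdeg_add inrange_def)
  ultimately show "\<exists>M c. finite M \<and> (\<forall>a\<in>M. mdeg a \<le> k + l \<and> inrange n m a) \<and> (\<forall>A\<in>Z. F A * G A = (\<Sum>a\<in>M. c a * mev A a))"
    using fin by (intro exI[of _ ?M] exI[of _ ?c]) auto
qed

lemma lowfun_prod: "finite I \<Longrightarrow> (\<And>i. i \<in> I \<Longrightarrow> lowfun Z n m (k i) (F i))
   \<Longrightarrow> lowfun Z n m (\<Sum>i\<in>I. k i) (\<lambda>A. \<Prod>i\<in>I. F i A)"
proof (induction I rule: finite_induct)
  case empty then show ?case using lowfun_const[of Z n m 0 1] by simp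
next
  case (insert x I)
  then show ?case using lowfun_mult[of Z n m "k x" "F x" "\<Sum>i\<in>I. k i" "\<lambda>A. \<Prod>i\<in>I. F i A"] by simp
qed



lemma polys_zero [simp]: "0 \<in> polys n m" by (simp add: polys_def)
lemma polys_one [simp]: "1 \<in> polys n m" by (simp add: polys_def)
lemma polys_add: "p \<in> polys n m \<Longrightarrow> q \<in> polys n m \<Longrightarrow> p + q \<in> polys n m"
  unfolding polys_def using keys_add_sub[of p q] by blast
lemma polys_diff: "p \<in> polys n m \<Longrightarrow> q \<in> polys n m \<Longrightarrow> p - q \<in> polys n m"
  unfolding polys_def using keys_diff_sub[of p q] by blast

lemma homog_zero [simp]: "0 \<in> homog n m d" by (simp add: homog_def)
lemma homog_add: "p \<in> homog n m d \<Longrightarrow> q \<in> homog n m d \<Longrightarrow> p + q \<in> homog n m d"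
  unfolding homog_def using keys_add_sub[of p q] polys_add by blast
lemma homog_sum: "finite I \<Longrightarrow> (\<And>i. i \<in> I \<Longrightarrow> p i \<in> homog n m d) \<Longrightarrow> (\<Sum>i\<in>I. p i) \<in> homog n m d"
  by (induction I rule: finite_induct) (auto intro: homog_add)

lemma gen_ideal_zero [simp]: "0 \<in> gen_ideal n m S"
  unfolding gen_ideal_def by (rule CollectI, rule exI[of _ "{}"]) auto

lemma gen_ideal_add:
  assumes "x \<in> gen_ideal n m S" "y \<in> gen_ideal n m S"
  shows "x + y \<in> gen_ideal n m S"
proof -
  obtain F1 c1 where h1: "finite F1" "F1 \<subseteq> S" "\<forall>g\<in>F1. c1 g \<in> polys n m" "x = (\<Sum>g\<in>F1. c1 g * g)"
    using assms(1) unfolding gen_ideal_def by blast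
  obtain F2 c2 where h2: "finite F2" "F2 \<subseteq> S" "\<forall>g\<in>F2. c2 g \<in> polys n m" "y = (\<Sum>g\<in>F2. c2 g * g)"
    using assms(2) unfolding gen_ideal_def by blast
  let ?c = "\<lambda>g. (if g \<in> F1 then c1 g else 0) + (if g \<in> F2 then c2 g else 0)"
  have e1: "(\<Sum>g\<in>F1\<union>F2. (if g \<in> F1 then c1 g else 0) * g) = x"
    unfolding h1(4) using h1 h2 by (intro sum.mono_neutral_cong_right) auto
  have e2: "(\<Sum>g\<in>F1\<union>F2. (if g \<in> F2 then c2 g else 0) * g) = y"
    unfolding h2(4) using h1 h2 by (intro sum.mono_neutral_cong_right) auto
  have "x + y = (\<Sum>g\<in>F1\<union>F2. ?c g * g)"
    using e1 e2 by (simp add: distrib_right sum.distrib)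
  moreover have "\<forall>g\<in>F1\<union>F2. ?c g \<in> polys n m"
    using h1 h2 by (auto intro: polys_add)
  ultimately show ?thesis unfolding gen_ideal_def using h1 h2
    by (intro CollectI exI[of _ "F1 \<union> F2"] exI[of _ ?c]) auto
qed

definition JJ :: "nat \<Rightarrow> nat \<Rightarrow> (nat \<Rightarrow> nat \<Rightarrow> complex) set \<Rightarrow> nat \<Rightarrow> cpoly set" where
  "JJ n m Z d = gr_ideal n m (vanishing_ideal n m Z) \<inter> homog n m d"

lemma JJ_zero [simp]: "0 \<in> JJ n m Z d"
  by (simp add: JJ_def gr_ideal_def)

lemma JJ_add: "p \<in> JJ n m Z d \<Longrightarrow> q \<in> JJ n m Z d \<Longrightarrow> p + q \<in> JJ n m Z d"
  unfolding JJ_def gr_ideal_def by (auto intro: gen_ideal_add homog_add)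

lemma JJ_sum: "finite I \<Longrightarrow> (\<And>i. i \<in> I \<Longrightarrow> p i \<in> JJ n m Z d) \<Longrightarrow> (\<Sum>i\<in>I. p i) \<in> JJ n m Z d"
  by (induction I rule: finite_induct) (auto intro: JJ_add)

lemma to_JJ:
  assumes hp: "p \<in> homog n m d" and d1: "1 \<le> d"
    and lf: "lowfun Z n m (d - 1) (\<lambda>A. peval A p)"
  shows "p \<in> JJ n m Z d"
proof (cases "p = 0")
  case True then show ?thesis by simp
next
  case False
  obtain M c where M: "finite M" "\<forall>a\<in>M. mdeg a \<le> d - 1 \<and> inrange n m a"
      "\<forall>A\<in>Z. peval A p = (\<Sum>a\<in>M. c a * mev A a)"
    using lf unfolding lowfun_def by blast
  define f where "f = (\<lambda>a. if a \<in> M then c a else 0)"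
  have ff: "finite {a. f a \<noteq> 0}" using M(1) by (rule finite_subset[rotated]) (auto simp: f_def)
  define q where "q = Abs_poly_mapping f"
  have lq: "Poly_Mapping.lookup q = f" using ff by (simp add: q_def)
  have kq: "Poly_Mapping.keys q \<subseteq> M" by (auto simp: in_keys_iff lq f_def split: if_splits)
  have pq: "peval A q = (\<Sum>a\<in>M. c a * mev A a)" for A
    using peval_superset[OF M(1) kq, of A] by (simp add: lq f_def)
  have qpoly: "q \<in> polys n m" using kq M(2) by (auto simp: polys_def inrange_def)
  have ppoly: "p \<in> polys n m" and pd: "\<forall>a\<in>Poly_Mapping.keys p. mdeg a = d"
    using hp by (auto simp: homog_def)
  have van: "p - q \<in> vanishing_ideal n m Z"
    using M(3) pq polys_diff[OF ppoly qpoly] by (simp add: vanishing_ideal_def peval_diff)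
  have notM: "mdeg a = d \<Longrightarrow> a \<notin> M" for a using M(2) d1 by fastforce
  have kp: "Poly_Mapping.keys p \<subseteq> Poly_Mapping.keys (p - q)"
  proof
    fix a assume a: "a \<in> Poly_Mapping.keys p"
    then have "a \<notin> M" using pd notM by blast
    then show "a \<in> Poly_Mapping.keys (p - q)" using a by (simp add: in_keys_iff lookup_minus lq f_def)
  qed
  have kpq: "Poly_Mapping.keys (p - q) \<subseteq> Poly_Mapping.keys p \<union> M" using keys_diff_sub[of p q] kq by blast
  have ne: "Poly_Mapping.keys p \<noteq> {}" using False by simp
  have td: "tdeg (p - q) = d"
    unfolding tdeg_def
  proof (rule Max_eqI)
    show "finite (mdeg ` Poly_Mapping.keys (p - q))" by simp
    show "y \<le> d" if "y \<in> mdeg ` Poly_Mapping.keys (p - q)" for y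
      using that kpq pd M(2) by fastforce
    obtain a where "a \<in> Poly_Mapping.keys p" using ne by blast
    then show "d \<in> mdeg ` Poly_Mapping.keys (p - q)" using kp pd by (metis image_eqI subsetD)
  qed
  have pq0: "p - q \<noteq> 0" using kp ne by auto
  have tc: "top_comp (p - q) = p"
  proof -
    have "(\<lambda>a. if mdeg a = tdeg (p - q) then Poly_Mapping.lookup (p - q) a else 0) = Poly_Mapping.lookup p"
    proof
      fix a show "(if mdeg a = tdeg (p - q) then Poly_Mapping.lookup (p - q) a else 0) = Poly_Mapping.lookup p a"
        using notM[of a] pd td by (auto simp: lookup_minus lq f_def in_keys_iff)
    qed
    then show ?thesis unfolding top_comp_def by simp
  qed
  have "p \<in> gen_ideal n m {top_comp p | p. p \<in> vanishing_ideal n m Z \<and> p \<noteq> 0}"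
    unfolding gen_ideal_def
    apply (rule CollectI, rule exI[of _ "{p}"], rule exI[of _ "\<lambda>_. 1"])
    using van pq0 tc by (auto intro!: exI[of _ "p - q"])
  then show ?thesis using hp by (simp add: JJ_def gr_ideal_def)
qed



lemma inj_pairmap: "bij g \<Longrightarrow> bij h \<Longrightarrow> inj (\<lambda>(i::nat,j::nat). (g i, h j))"
  by (auto simp: inj_def bij_def split: prod.splits)

lemma mr_lookup:
  assumes "bij g" "bij h"
  shows "Poly_Mapping.lookup (mono_ren g h b) = (\<lambda>(i,j). Poly_Mapping.lookup b (g i, h j))"
proof -
  have "{x. (\<lambda>(i,j). Poly_Mapping.lookup b (g i, h j)) x \<noteq> 0} = (\<lambda>(i,j). (g i, h j)) -` Poly_Mapping.keys b"
    by (auto simp: in_keys_iff)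
  moreover have "finite ((\<lambda>(i,j). (g i, h j)) -` Poly_Mapping.keys b)"
    by (rule finite_vimageI) (auto simp: inj_pairmap[OF assms])
  ultimately show ?thesis unfolding mono_ren_def by simp
qed

lemma mr_keys:
  assumes "bij g" "bij h"
  shows "Poly_Mapping.keys (mono_ren g h b) = (\<lambda>(i,j). (g i, h j)) -` Poly_Mapping.keys b"
  by (auto simp: in_keys_iff mr_lookup[OF assms])

lemma mr_inv:
  assumes "bij g" "bij h"
  shows "mono_ren g h (mono_ren (inv g) (inv h) a) = a"
proof -
  have bi: "bij (inv g)" "bij (inv h)" using assms by (auto simp: bij_imp_bij_inv)
  show ?thesis
    by (rule poly_mapping_eqI)
       (simp add: mr_lookup[OF assms] mr_lookup[OF bi] split_beta bij_inv_eq_iff[OF assms(1)]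
          bij_inv_eq_iff[OF assms(2)] inv_f_f bij_is_inj assms)
qed

lemma mr_inj:
  assumes "bij g" "bij h"
  shows "inj (mono_ren g h)"
proof
  fix a b assume e: "mono_ren g h a = mono_ren g h b"
  have bi: "bij (inv g)" "bij (inv h)" using assms by (auto simp: bij_imp_bij_inv)
  have "mono_ren (inv g) (inv h) (mono_ren g h a) = a" for a
    using mr_inv[OF bi, of a] assms by (simp add: inv_inv_eq)
  then show "a = b" using e by metis
qed

lemma mev_mr:
  assumes "bij g" "bij h"
  shows "mev A (mono_ren g h b) = mev (\<lambda>i j. A (inv g i) (inv h j)) b"
proof -
  let ?f = "\<lambda>(i,j). (g i, h j)"
  have bb: "bij_betw ?f (?f -` Poly_Mapping.keys b) (Poly_Mapping.keys b)"
  proof (rule bij_betw_imageI)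
    show "inj_on ?f (?f -` Poly_Mapping.keys b)" by (rule inj_on_subset[OF inj_pairmap[OF assms]]) simp
    show "?f ` (?f -` Poly_Mapping.keys b) = Poly_Mapping.keys b"
    proof -
      have "surj ?f" using assms by (auto simp: bij_def surj_def split: prod.splits)
      then show ?thesis by (simp add: surj_image_vimage_eq)
    qed
  qed
  have "mev A (mono_ren g h b) = (\<Prod>v\<in>?f -` Poly_Mapping.keys b. A (fst v) (snd v) ^ Poly_Mapping.lookup b (?f v))"
    unfolding mev_def mr_keys[OF assms] mr_lookup[OF assms] by (simp add: split_beta)
  also have "\<dots> = (\<Prod>v\<in>?f -` Poly_Mapping.keys b. A (inv g (fst (?f v))) (inv h (snd (?f v))) ^ Poly_Mapping.lookup b (?f v))"
    using assms by (simp add: split_beta inv_f_f bij_is_inj)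
  also have "\<dots> = (\<Prod>w\<in>Poly_Mapping.keys b. A (inv g (fst w)) (inv h (snd w)) ^ Poly_Mapping.lookup b w)"
    by (rule prod.reindex_bij_betw[OF bb, where g = "\<lambda>w. A (inv g (fst w)) (inv h (snd w)) ^ Poly_Mapping.lookup b w"])
  finally show ?thesis by (simp add: mev_def)
qed

lemma mdeg_mr:
  assumes "bij g" "bij h"
  shows "mdeg (mono_ren g h b) = mdeg b"
proof -
  let ?f = "\<lambda>(i,j). (g i, h j)"
  have bb: "bij_betw ?f (?f -` Poly_Mapping.keys b) (Poly_Mapping.keys b)"
  proof (rule bij_betw_imageI)
    show "inj_on ?f (?f -` Poly_Mapping.keys b)" by (rule inj_on_subset[OF inj_pairmap[OF assms]]) simp
    show "?f ` (?f -` Poly_Mapping.keys b) = Poly_Mapping.keys b"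
    proof -
      have "surj ?f" using assms by (auto simp: bij_def surj_def split: prod.splits)
      then show ?thesis by (simp add: surj_image_vimage_eq)
    qed
  qed
  have "mdeg (mono_ren g h b) = (\<Sum>v\<in>?f -` Poly_Mapping.keys b. Poly_Mapping.lookup b (?f v))"
    unfolding mdeg_def mr_keys[OF assms] mr_lookup[OF assms] by (simp add: split_beta)
  also have "\<dots> = (\<Sum>w\<in>Poly_Mapping.keys b. Poly_Mapping.lookup b w)"
    by (rule sum.reindex_bij_betw[OF bb])
  finally show ?thesis by (simp add: mdeg_def)
qed

lemma pact_lookup:
  assumes "bij g" "bij h"
  shows "Poly_Mapping.lookup (pact g h p) = (\<lambda>b. Poly_Mapping.lookup p (mono_ren g h b))"
proof -
  have "{b. Poly_Mapping.lookup p (mono_ren g h b) \<noteq> 0} = mono_ren g h -` Poly_Mapping.keys p"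
    by (auto simp: in_keys_iff)
  moreover have "finite (mono_ren g h -` Poly_Mapping.keys p)"
    by (rule finite_vimageI) (auto simp: mr_inj[OF assms])
  ultimately show ?thesis unfolding pact_def by simp
qed

lemma pact_keys:
  assumes "bij g" "bij h"
  shows "Poly_Mapping.keys (pact g h p) = mono_ren (inv g) (inv h) ` Poly_Mapping.keys p"
proof -
  have bi: "bij (inv g)" "bij (inv h)" using assms by (auto simp: bij_imp_bij_inv)
  have r: "mono_ren (inv g) (inv h) (mono_ren g h a) = a" for a
    using mr_inv[OF bi, of a] assms by (simp add: inv_inv_eq)
  show ?thesis
  proof (intro equalityI subsetI)
    fix x assume "x \<in> Poly_Mapping.keys (pact g h p)"
    then have "mono_ren g h x \<in> Poly_Mapping.keys p" by (simp add: in_keys_iff pact_lookup[OF assms])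
    then show "x \<in> mono_ren (inv g) (inv h) ` Poly_Mapping.keys p" using r[of x] by (metis image_eqI)
  next
    fix x assume "x \<in> mono_ren (inv g) (inv h) ` Poly_Mapping.keys p"
    then obtain a where "a \<in> Poly_Mapping.keys p" "x = mono_ren (inv g) (inv h) a" by blast
    then show "x \<in> Poly_Mapping.keys (pact g h p)"
      by (simp add: in_keys_iff pact_lookup[OF assms] mr_inv[OF assms])
  qed
qed

lemma peval_pact:
  assumes "bij g" "bij h"
  shows "peval A (pact g h p) = peval (\<lambda>i j. A (g i) (h j)) p"
proof -
  have bi: "bij (inv g)" "bij (inv h)" using assms by (auto simp: bij_imp_bij_inv)
  have inj: "inj_on (mono_ren (inv g) (inv h)) (Poly_Mapping.keys p)"
    using mr_inj[OF bi] by (simp add: inj_on_def inj_def)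
  have "peval A (pact g h p) = (\<Sum>b\<in>mono_ren (inv g) (inv h) ` Poly_Mapping.keys p.
        Poly_Mapping.lookup p (mono_ren g h b) * mev A b)"
    unfolding peval_mev pact_keys[OF assms] pact_lookup[OF assms] ..
  also have "\<dots> = (\<Sum>a\<in>Poly_Mapping.keys p. Poly_Mapping.lookup p a * mev A (mono_ren (inv g) (inv h) a))"
    by (subst sum.reindex[OF inj]) (simp add: mr_inv[OF assms])
  also have "\<dots> = peval (\<lambda>i j. A (g i) (h j)) p"
    unfolding peval_mev using assms by (simp add: mev_mr[OF bi] inv_inv_eq)
  finally show ?thesis .
qed

lemma pact_homog:
  assumes "g permutes {..<n}" "h permutes {..<m}" "p \<in> homog n m d"
  shows "pact g h p \<in> homog n m d"
proof -
  have bb: "bij g" "bij h" using assms permutes_bij by blast+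
  have bi: "bij (inv g)" "bij (inv h)" using bb by (auto simp: bij_imp_bij_inv)
  have ig: "inv g i < n \<Longrightarrow> i < n" for i using assms(1)
    by (metis lessThan_iff permutes_inverses(1) permutes_in_image)
  have ih: "inv h j < m \<Longrightarrow> j < m" for j using assms(2)
    by (metis lessThan_iff permutes_inverses(1) permutes_in_image)
  show ?thesis
    using assms(3) unfolding homog_def polys_def
    apply (auto simp: pact_keys[OF bb] mdeg_mr[OF bi] mr_keys[OF bi])
    using ig ih by fastforce+
qed



definition rookset :: "nat \<Rightarrow> nat \<Rightarrow> nat \<Rightarrow> (nat \<Rightarrow> nat \<Rightarrow> complex) set \<Rightarrow> bool" where
  "rookset n m r Z \<longleftrightarrow> (\<forall>A\<in>Z. (\<forall>i j. A i j = 0 \<or> A i j = 1) \<and> (\<forall>i j. (i \<ge> n \<or> j \<ge> m) \<longrightarrow> A i j = 0) \<and>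
      card {(i,j). i < n \<and> j < m \<and> A i j = 1} = r \<and>
      (\<forall>i j j'. A i j = 1 \<and> A i j' = 1 \<longrightarrow> j = j') \<and>
      (\<forall>i i' j. A i j = 1 \<and> A i' j = 1 \<longrightarrow> i = i'))"

lemma rooksetD:
  assumes "rookset n m r Z" "A \<in> Z"
  shows "A i j = 0 \<or> A i j = 1" "i \<ge> n \<Longrightarrow> A i j = 0" "j \<ge> m \<Longrightarrow> A i j = 0"
    "card {(i,j). i < n \<and> j < m \<and> A i j = 1} = r"
    "A i j = 1 \<Longrightarrow> A i j' = 1 \<Longrightarrow> j = j'" "A i j = 1 \<Longrightarrow> A i' j = 1 \<Longrightarrow> i = i'"
  using assms unfolding rookset_def by blast+

lemma sum01_unique:
  fixes f :: "'a \<Rightarrow> complex"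
  assumes "finite I" "i0 \<in> I" "f i0 = 1" "\<And>i. i \<in> I \<Longrightarrow> f i = 0 \<or> f i = 1" "\<And>i. i \<in> I \<Longrightarrow> f i = 1 \<Longrightarrow> i = i0"
  shows "sum f I = 1"
proof -
  have "sum f I = (\<Sum>i\<in>I. if i = i0 then 1 else 0)"
    using assms by (intro sum.cong refl) (metis)
  also have "\<dots> = 1" using assms(1,2) by simp
  finally show ?thesis .
qed

lemma col_occ:
  assumes Z: "rookset n m r Z" "A \<in> Z" and L: "L \<subseteq> {..<m}" "m - r + 1 \<le> card L"
  shows "\<exists>j\<in>L. \<exists>i<n. A i j = 1"
proof (rule ccontr)
  assume no: "\<not> ?thesis"
  let ?O = "{(i,j). i < n \<and> j < m \<and> A i j = 1}"
  have cO: "card ?O = r" using rooksetD(4)[OF Z] .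
  have inj: "inj_on snd ?O" using rooksetD(6)[OF Z] by (auto simp: inj_on_def)
  have sub: "snd ` ?O \<subseteq> {..<m} - L" using no by auto
  have "r = card (snd ` ?O)" using card_image[OF inj] cO by simp
  also have "\<dots> \<le> card ({..<m} - L)" by (rule card_mono[OF _ sub]) simp
  also have "\<dots> = m - card L" using L(1) by (simp add: card_Diff_subset finite_subset)
  finally have "r \<le> m - card L" .
  moreover have "card L \<le> m" using card_mono[OF _ L(1)] by simp
  ultimately show False using L(2) by arith
qed

definition colsum :: "nat \<Rightarrow> nat \<Rightarrow> (nat \<Rightarrow> nat \<Rightarrow> complex) \<Rightarrow> complex" where
  "colsum n j A = (\<Sum>i<n. A i j)"

lemma lowfun_colsum: "j < m \<Longrightarrow> lowfun Z n m 1 (colsum n j)"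
proof -
  assume j: "j < m"
  have "lowfun Z n m 1 (\<lambda>A. \<Sum>i\<in>{..<n}. A i j)"
  proof (rule lowfun_sum)
    fix i assume "i \<in> {..<n}"
    then show "lowfun Z n m 1 (\<lambda>A. A i j)" using lowfun_var[of i n j m Z] j by simp
  qed simp
  then show ?thesis unfolding colsum_def by simp
qed

lemma lowfun_prod_vars:
  assumes "finite K" "\<And>v. v \<in> K \<Longrightarrow> ri v < n \<and> ci v < m"
  shows "lowfun Z n m (card K) (\<lambda>A. \<Prod>v\<in>K. A (ri v) (ci v))"
  using lowfun_prod[OF assms(1), of Z n m "\<lambda>_. 1" "\<lambda>v A. A (ri v) (ci v)"] assms(2) lowfun_var
  by simp

lemma lowfun_colprod:
  assumes Z: "rookset n m r Z" and L: "L \<subseteq> {..<m}" "m - r + 1 \<le> card L"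
  shows "lowfun Z n m (card L - 1) (\<lambda>A. \<Prod>j\<in>L. colsum n j A)"
proof -
  have fL: "finite L" using L(1) finite_subset by blast
  have cL: "card L \<ge> 1" using L(2) by simp
  let ?R = "\<lambda>A. \<Sum>X\<in>Pow L - {L}. \<Prod>j\<in>X. - colsum n j A"
  have lowR: "lowfun Z n m (card L - 1) ?R"
  proof (rule lowfun_sum)
    show "finite (Pow L - {L})" using fL by simp
    fix X assume X: "X \<in> Pow L - {L}"
    then have Xs: "X \<subset> L" by auto
    have fX: "finite X" using Xs fL finite_subset by blast
    have "lowfun Z n m (\<Sum>j\<in>X. 1) (\<lambda>A. \<Prod>j\<in>X. - colsum n j A)"
      by (rule lowfun_prod[OF fX]) (use Xs L(1) lowfun_colsum lowfun_scale[of Z n m 1 _ "-1"] in auto)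
    moreover have "card X \<le> card L - 1" using psubset_card_mono[OF fL Xs] by simp
    ultimately show "lowfun Z n m (card L - 1) (\<lambda>A. \<Prod>j\<in>X. - colsum n j A)"
      using lowfun_mono by simp
  qed
  have key: "(\<Prod>j\<in>L. colsum n j A) = - ((-1) ^ card L * ?R A)" if A: "A \<in> Z" for A
  proof -
    obtain j i where ji: "j \<in> L" "i < n" "A i j = 1" using col_occ[OF Z A L] by blast
    have cs: "colsum n j A = 1" unfolding colsum_def
      by (rule sum01_unique[of _ i]) (use ji rooksetD[OF Z A] in auto)
    have "(\<Prod>j\<in>L. - colsum n j A + 1) = 0"
      using ji(1) cs fL by (intro prod_zero) auto
    then have "(\<Sum>X\<in>Pow L. (\<Prod>j\<in>X. - colsum n j A) * (\<Prod>j\<in>L - X. 1)) = 0"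
      using prod_add[OF fL, of "\<lambda>j. - colsum n j A" "\<lambda>_. 1"] by simp
    then have "(\<Prod>j\<in>L. - colsum n j A) + ?R A = 0"
      using fL by (simp add: sum.remove[of "Pow L" L])
    moreover have "(\<Prod>j\<in>L. - colsum n j A) = (-1) ^ card L * (\<Prod>j\<in>L. colsum n j A)"
      by (simp add: prod_uminus)  
    ultimately have "(-1) ^ card L * (\<Prod>j\<in>L. colsum n j A) = - ?R A" by (simp add: eq_neg_iff_add_eq_0)
    then have "(-1) ^ card L * ((-1) ^ card L * (\<Prod>j\<in>L. colsum n j A)) = (-1) ^ card L * (- ?R A)" by simp
    then show ?thesis by (simp flip: power_add mult.assoc add: power_even_eq[symmetric] mult_2[symmetric])
  qed
  have "lowfun Z n m (card L - 1) (\<lambda>A. - ((-1) ^ card L * ?R A))"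
    using lowfun_scale[OF lowfun_scale[OF lowR, of "(-1) ^ card L"], of "-1"] by simp
  then show ?thesis using key lowfun_cong by (metis (no_types, lifting))
qed

lemma count_perm_ext:
  assumes fS: "finite S" and D: "D \<subseteq> S" and g: "inj_on g D" "g ` D \<subseteq> S"
  shows "card {s. s permutes S \<and> (\<forall>x\<in>D. s x = g x)} = fact (card S - card D)"
proof -
  have fD: "finite D" using D fS finite_subset by blast
  have cgD: "card (g ` D) = card D" using card_image[OF g(1)] .
  have "card (S - D) = card (S - g ` D)"
    using fS D g(2) cgD fD by (simp add: card_Diff_subset)
  then obtain g' where g': "bij_betw g' (S - D) (S - g ` D)"
    using finite_same_card_bij fS by blast
  define s0 where "s0 = (\<lambda>x. if x \<in> D then g x else if x \<in> S then g' x else x)"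
  have b1: "bij_betw s0 D (g ` D)" unfolding s0_def using g(1)
    by (simp add: bij_betw_def inj_on_def)
  have b2: "bij_betw s0 (S - D) (S - g ` D)" unfolding s0_def using g'
    by (simp add: bij_betw_def inj_on_def image_def)
  have "bij_betw s0 (D \<union> (S - D)) (g ` D \<union> (S - g ` D))"
    by (rule bij_betw_combine[OF b1 b2]) blast
  then have bS: "bij_betw s0 S S" using D g(2) by (simp add: Un_absorb1 Un_Diff_cancel)
  have s0p: "s0 permutes S"
    by (rule bij_imp_permutes[OF bS]) (use D in \<open>auto simp: s0_def\<close>)
  have s0D: "\<forall>x\<in>D. s0 x = g x" by (simp add: s0_def)
  let ?P = "{p. p permutes (S - D)}"
  let ?Q = "{s. s permutes S \<and> (\<forall>x\<in>D. s x = g x)}"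
  have bij: "bij_betw (\<lambda>p. s0 \<circ> p) ?P ?Q"
  proof (rule bij_betwI[where g = "\<lambda>s. inv s0 \<circ> s"])
    show "(\<lambda>p. s0 \<circ> p) \<in> ?P \<rightarrow> ?Q"
    proof
      fix p assume "p \<in> ?P"
      then have p: "p permutes (S - D)" by simp
      then have "p permutes S" using permutes_subset by blast
      moreover have "\<forall>x\<in>D. p x = x" using p by (meson DiffD2 permutes_not_in)
      ultimately show "s0 \<circ> p \<in> ?Q" using s0p s0D permutes_compose by auto
    qed
    show "(\<lambda>s. inv s0 \<circ> s) \<in> ?Q \<rightarrow> ?P"
    proof
      fix s assume "s \<in> ?Q"
      then have s: "s permutes S" "\<forall>x\<in>D. s x = g x" by auto
      have ps: "inv s0 \<circ> s permutes S" using s(1) permutes_inv[OF s0p] permutes_compose by blast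
      have fixD: "\<forall>x\<in>D. (inv s0 \<circ> s) x = x"
        using s(2) s0D permutes_inverses(2)[OF s0p] by (metis comp_apply)
      have "inv s0 \<circ> s permutes (S - D)"
        unfolding permutes_def
      proof
        show "\<forall>x. x \<notin> S - D \<longrightarrow> (inv s0 \<circ> s) x = x"
          using fixD ps by (meson Diff_iff permutes_not_in)
        show "\<forall>y. \<exists>!x. (inv s0 \<circ> s) x = y" using ps unfolding permutes_def by blast
      qed
      then show "inv s0 \<circ> s \<in> ?P" by simp
    qed
    show "inv s0 \<circ> (s0 \<circ> p) = p" for p
      using permutes_inverses(2)[OF s0p] by (simp add: fun_eq_iff)
    show "s0 \<circ> (inv s0 \<circ> s) = s" for s
      using permutes_inverses(1)[OF s0p] by (simp add: fun_eq_iff)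
  qed
  have "card ?Q = card ?P" using bij_betw_same_card[OF bij] by simp
  also have "\<dots> = fact (card (S - D))" using card_permutations fS by blast
  also have "card (S - D) = card S - card D" using D fD by (simp add: card_Diff_subset)
  finally show ?thesis .
qed



lemma mev01:
  assumes "\<forall>v\<in>Poly_Mapping.keys a. B (fst v) (snd v) = 0 \<or> B (fst v) (snd v) = 1"
  shows "mev B a = (\<Prod>v\<in>Poly_Mapping.keys a. B (fst v) (snd v))"
  unfolding mev_def
proof (rule prod.cong[OF refl])
  fix v assume v: "v \<in> Poly_Mapping.keys a"
  then have "Poly_Mapping.lookup a v \<noteq> 0" by (simp add: in_keys_iff)
  then show "B (fst v) (snd v) ^ Poly_Mapping.lookup a v = B (fst v) (snd v)"
    using assms v by (cases "Poly_Mapping.lookup a v") auto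
qed

lemma card_keys_le_mdeg: "card (Poly_Mapping.keys a) \<le> mdeg a"
proof -
  have "card (Poly_Mapping.keys a) = (\<Sum>v\<in>Poly_Mapping.keys a. 1)" by simp
  also have "\<dots> \<le> (\<Sum>v\<in>Poly_Mapping.keys a. Poly_Mapping.lookup a v)"
    by (rule sum_mono) (simp add: in_keys_iff Suc_le_eq)
  finally show ?thesis by (simp add: mdeg_def)
qed

lemma sum_indicator_card:
  "finite P \<Longrightarrow> (\<Sum>x\<in>P. if Q x then 1 else (0::complex)) = of_nat (card {x\<in>P. Q x})"
  by (simp add: sum.inter_filter[symmetric])

lemma step1:
  assumes Z: "rookset n m r Z" "A \<in> Z" and S: "S \<subseteq> {..<n}"
    and K: "finite K" "inj_on fst K" "inj_on snd K"
  defines "KB \<equiv> {v\<in>K. fst v \<in> S}"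
  shows "(\<Sum>s\<in>{s. s permutes S}. \<Prod>v\<in>K. A (s (fst v)) (snd v)) =
     of_nat (fact (card S - card KB)) * ((\<Prod>v\<in>K - KB. A (fst v) (snd v)) * (\<Prod>v\<in>KB. \<Sum>i\<in>S. A i (snd v)))"
proof -
  have fS: "finite S" using S finite_subset by blast
  have fP: "finite {s. s permutes S}" using finite_permutations[OF fS] .
  have fKB: "finite KB" using K(1) by (simp add: KB_def)
  have KBK: "KB \<subseteq> K" by (auto simp: KB_def)
  have split: "(\<Prod>v\<in>K. A (s (fst v)) (snd v)) = (\<Prod>v\<in>K - KB. A (fst v) (snd v)) * (\<Prod>v\<in>KB. A (s (fst v)) (snd v))"
    if s: "s permutes S" for s
  proof -
    have "(\<Prod>v\<in>K. A (s (fst v)) (snd v)) = (\<Prod>v\<in>K - KB. A (s (fst v)) (snd v)) * (\<Prod>v\<in>KB. A (s (fst v)) (snd v))"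
      using prod.subset_diff[OF KBK K(1)] by simp
    moreover have "(\<Prod>v\<in>K - KB. A (s (fst v)) (snd v)) = (\<Prod>v\<in>K - KB. A (fst v) (snd v))"
      by (rule prod.cong[OF refl]) (use permutes_not_in[OF s] in \<open>auto simp: KB_def\<close>)
    ultimately show ?thesis by simp
  qed
  have inner: "(\<Sum>s\<in>{s. s permutes S}. \<Prod>v\<in>KB. A (s (fst v)) (snd v)) =
      of_nat (fact (card S - card KB)) * (\<Prod>v\<in>KB. \<Sum>i\<in>S. A i (snd v))"
  proof (cases "\<forall>v\<in>KB. \<exists>i\<in>S. A i (snd v) = 1")
    case True
    then obtain \<rho> where rho: "\<forall>v\<in>KB. \<rho> v \<in> S \<and> A (\<rho> v) (snd v) = 1" by metis
    have cs: "(\<Sum>i\<in>S. A i (snd v)) = 1" if v: "v \<in> KB" for v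
      by (rule sum01_unique[OF fS, of "\<rho> v"]) (use rho v rooksetD[OF Z] in auto)
    have ind: "(\<Prod>v\<in>KB. A (s (fst v)) (snd v)) = (if \<forall>v\<in>KB. s (fst v) = \<rho> v then 1 else 0)"
      if s: "s permutes S" for s
    proof (cases "\<forall>v\<in>KB. s (fst v) = \<rho> v")
      case True then show ?thesis using rho by simp
    next
      case False
      then obtain v where v: "v \<in> KB" "s (fst v) \<noteq> \<rho> v" by blast
      have "A (s (fst v)) (snd v) \<noteq> 1" using v rho rooksetD(6)[OF Z] by blast
      then have "A (s (fst v)) (snd v) = 0" using rooksetD(1)[OF Z] by blast
      then show ?thesis using False v fKB by (simp add: prod_zero_iff) blast
    qed
    define D where "D = fst ` KB"
    define g where "g = (\<lambda>x. \<rho> (inv_into KB fst x))"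
    have injKB: "inj_on fst KB" using K(2) KBK inj_on_subset by blast
    have gv: "g (fst v) = \<rho> v" if "v \<in> KB" for v using that injKB by (simp add: g_def)
    have eqv: "(\<forall>v\<in>KB. s (fst v) = \<rho> v) \<longleftrightarrow> (\<forall>x\<in>D. s x = g x)" for s
      using gv by (auto simp: D_def)
    have DS: "D \<subseteq> S" by (auto simp: D_def KB_def)
    have ginj: "inj_on g D"
    proof (rule inj_onI)
      fix x y assume xy: "x \<in> D" "y \<in> D" "g x = g y"
      then obtain v w where vw: "v \<in> KB" "w \<in> KB" "x = fst v" "y = fst w" by (auto simp: D_def)
      then have "\<rho> v = \<rho> w" using xy gv by simp
      then have "snd v = snd w" using rho vw rooksetD(5)[OF Z] by metis
      then have "v = w" using K(3) KBK vw inj_on_def by (metis subsetD)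
      then show "x = y" using vw by simp
    qed
    have gS: "g ` D \<subseteq> S" using rho gv by (auto simp: D_def)
    have cD: "card D = card KB" using card_image[OF injKB] by (simp add: D_def)
    have "(\<Sum>s\<in>{s. s permutes S}. \<Prod>v\<in>KB. A (s (fst v)) (snd v)) =
        (\<Sum>s\<in>{s. s permutes S}. if \<forall>x\<in>D. s x = g x then 1 else 0)"
      using ind eqv by (intro sum.cong refl) auto
    also have "\<dots> = of_nat (card {s\<in>{s. s permutes S}. \<forall>x\<in>D. s x = g x})"
      by (rule sum_indicator_card[OF fP])
    also have "{s\<in>{s. s permutes S}. \<forall>x\<in>D. s x = g x} = {s. s permutes S \<and> (\<forall>x\<in>D. s x = g x)}" by auto
    also have "card \<dots> = fact (card S - card KB)" using count_perm_ext[OF fS DS ginj gS] cD by simp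
    finally show ?thesis using cs by simp
  next
    case False
    then obtain v where v: "v \<in> KB" "\<forall>i\<in>S. A i (snd v) \<noteq> 1" by blast
    then have z: "\<forall>i\<in>S. A i (snd v) = 0" using rooksetD(1)[OF Z] by blast
    have "(\<Sum>i\<in>S. A i (snd v)) = 0" using z by simp
    then have "(\<Prod>v\<in>KB. \<Sum>i\<in>S. A i (snd v)) = 0" using v fKB by (intro prod_zero) auto
    moreover have "(\<Prod>v\<in>KB. A (s (fst v)) (snd v)) = 0" if s: "s permutes S" for s
    proof -
      have "s (fst v) \<in> S" using v(1) s by (simp add: KB_def permutes_in_image)
      then show ?thesis using v z fKB by (intro prod_zero) auto
    qed
    ultimately show ?thesis by simp
  qed
  have "(\<Sum>s\<in>{s. s permutes S}. \<Prod>v\<in>K. A (s (fst v)) (snd v)) =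
      (\<Sum>s\<in>{s. s permutes S}. (\<Prod>v\<in>K - KB. A (fst v) (snd v)) * (\<Prod>v\<in>KB. A (s (fst v)) (snd v)))"
    using split by (intro sum.cong refl) auto
  also have "\<dots> = (\<Prod>v\<in>K - KB. A (fst v) (snd v)) * (\<Sum>s\<in>{s. s permutes S}. \<Prod>v\<in>KB. A (s (fst v)) (snd v))"
    by (simp add: sum_distrib_left)
  finally show ?thesis using inner by simp
qed



lemma lowfun_tS: "j < m \<Longrightarrow> lowfun Z n m 1 (\<lambda>A. - (\<Sum>i\<in>{..<n} - S. A i j))"
proof -
  assume j: "j < m"
  have "lowfun Z n m 1 (\<lambda>A. \<Sum>i\<in>{..<n} - S. A i j)"
  proof (rule lowfun_sum)
    fix i assume "i \<in> {..<n} - S"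
    then show "lowfun Z n m 1 (\<lambda>A. A i j)" using lowfun_var[of i n j m Z] j by simp
  qed simp
  then show ?thesis using lowfun_scale[of Z n m 1 _ "-1"] by simp
qed

lemma step2:
  assumes Z: "rookset n m r Z" and S: "S \<subseteq> {..<n}" "card S = n + m - d - r + 1"
    and dr: "d \<le> r" "r \<le> m"
    and K: "finite K" "card K = d" "K \<subseteq> {..<n} \<times> {..<m}" "inj_on fst K" "inj_on snd K"
  defines "KB \<equiv> {v\<in>K. fst v \<in> S}"
  shows "lowfun Z n m (d - 1) (\<lambda>A. (\<Prod>v\<in>K - KB. A (fst v) (snd v)) * (\<Prod>v\<in>KB. \<Sum>i\<in>S. A i (snd v)))"
proof -
  let ?KA = "K - KB"
  let ?c = "\<lambda>v A. colsum n (snd v) A"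
  let ?t = "\<lambda>v A. - (\<Sum>i\<in>{..<n} - S. A i (snd v))"
  let ?T = "\<lambda>L A. (\<Prod>v\<in>?KA. A (fst v) (snd v)) * ((\<Prod>v\<in>L. ?c v A) * (\<Prod>v\<in>KB - L. ?t v A))"
  have fKB: "finite KB" using K(1) by (simp add: KB_def)
  have KBK: "KB \<subseteq> K" by (auto simp: KB_def)
  have fS: "finite S" using S finite_subset by blast
  have cSn: "card S \<le> n" using card_mono[OF _ S(1)] by simp
  have cK: "card ?KA + card KB = d"
    using K(1,2) KBK by (metis card_Diff_subset card_mono add.commute finite_subset le_add_diff_inverse)
  have eq: "(\<Prod>v\<in>?KA. A (fst v) (snd v)) * (\<Prod>v\<in>KB. \<Sum>i\<in>S. A i (snd v)) = (\<Sum>L\<in>Pow KB. ?T L A)" for A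
  proof -
    have "(\<Sum>i\<in>S. A i j) = colsum n j A + - (\<Sum>i\<in>{..<n} - S. A i j)" for j
      unfolding colsum_def using sum_diff[OF _ S(1), of "\<lambda>i. A i j"] by simp
    then have "(\<Prod>v\<in>KB. \<Sum>i\<in>S. A i (snd v)) = (\<Prod>v\<in>KB. ?c v A + ?t v A)" by simp
    also have "\<dots> = (\<Sum>L\<in>Pow KB. (\<Prod>v\<in>L. ?c v A) * (\<Prod>v\<in>KB - L. ?t v A))"
      by (rule prod_add[OF fKB])
    finally show ?thesis by (simp add: sum_distrib_left)
  qed
  have low: "lowfun Z n m (d - 1) (\<lambda>A. \<Sum>L\<in>Pow KB. ?T L A)"
  proof (rule lowfun_sum)
    show "finite (Pow KB)" using fKB by simp
    fix L assume "L \<in> Pow KB"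
    then have LKB: "L \<subseteq> KB" by simp
    have fL: "finite L" using LKB fKB finite_subset by blast
    show "lowfun Z n m (d - 1) (?T L)"
    proof (cases "m - r + 1 \<le> card L")
      case True
      have injL: "inj_on snd L" using K(5) LKB KBK inj_on_subset by blast
      have sL: "snd ` L \<subseteq> {..<m}" using LKB KBK K(3) by fastforce
      have cL: "card (snd ` L) = card L" using card_image[OF injL] .
      have l1: "lowfun Z n m (card L - 1) (\<lambda>A. \<Prod>v\<in>L. ?c v A)"
      proof -
        have "lowfun Z n m (card (snd ` L) - 1) (\<lambda>A. \<Prod>j\<in>snd ` L. colsum n j A)"
          by (rule lowfun_colprod[OF Z sL]) (use True cL in simp)
        then show ?thesis using cL by (simp add: prod.reindex[OF injL])
      qed
      have l2: "lowfun Z n m (\<Sum>v\<in>KB - L. 1) (\<lambda>A. \<Prod>v\<in>KB - L. ?t v A)"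
        by (rule lowfun_prod) (use fKB KBK K(3) lowfun_tS in auto)
      have l3: "lowfun Z n m (card ?KA) (\<lambda>A. \<Prod>v\<in>?KA. A (fst v) (snd v))"
        by (rule lowfun_prod_vars) (use K(1,3) in auto)
      have "lowfun Z n m (card ?KA + (card L - 1 + card (KB - L))) (?T L)"
        using lowfun_mult[OF l3 lowfun_mult[OF l1 l2]] by simp
      moreover have "card ?KA + (card L - 1 + card (KB - L)) = d - 1"
        using cK True card_Diff_subset[OF fL LKB] card_mono[OF fKB LKB] by simp
      ultimately show ?thesis by simp
    next
      case False
      have zero: "?T L A = 0" if A: "A \<in> Z" for A
      proof (rule ccontr)
        assume nz: "?T L A \<noteq> 0"
        then have p1: "(\<Prod>v\<in>?KA. A (fst v) (snd v)) \<noteq> 0" and p2: "(\<Prod>v\<in>KB - L. ?t v A) \<noteq> 0"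
          by auto
        have a1: "\<forall>v\<in>?KA. A (fst v) (snd v) = 1"
          using p1 K(1) rooksetD(1)[OF Z A] by (metis finite_Diff prod_zero_iff)
        have "\<forall>v\<in>KB - L. \<exists>i\<in>{..<n} - S. A i (snd v) = 1"
        proof
          fix v assume v: "v \<in> KB - L"
          then have "?t v A \<noteq> 0" using p2 fKB by (metis finite_Diff prod_zero_iff)
          then have "(\<Sum>i\<in>{..<n} - S. A i (snd v)) \<noteq> 0" by simp
          then obtain i where "i \<in> {..<n} - S" "A i (snd v) \<noteq> 0" by (meson sum.neutral)
          then show "\<exists>i\<in>{..<n} - S. A i (snd v) = 1" using rooksetD(1)[OF Z A] by blast
        qed
        then obtain \<rho> where rho: "\<forall>v\<in>KB - L. \<rho> v \<in> {..<n} - S \<and> A (\<rho> v) (snd v) = 1" by metis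
        define U where "U = ?KA \<union> (KB - L)"
        define \<phi> where "\<phi> = (\<lambda>v. if v \<in> ?KA then fst v else \<rho> v)"
        have phi1: "\<forall>v\<in>U. \<phi> v \<in> {..<n} - S \<and> A (\<phi> v) (snd v) = 1"
          using a1 rho K(3) by (auto simp: U_def \<phi>_def KB_def)
        have UK: "U \<subseteq> K" using KBK by (auto simp: U_def)
        have injU: "inj_on \<phi> U"
        proof (rule inj_onI)
          fix v w assume vw: "v \<in> U" "w \<in> U" "\<phi> v = \<phi> w"
          then have "snd v = snd w" using phi1 rooksetD(5)[OF Z A] by metis
          then show "v = w" using K(5) UK vw inj_on_def by (metis subsetD)
        qed
        have "card U \<le> card ({..<n} - S)"
          using card_inj_on_le[OF injU] phi1 by (meson finite_Diff finite_lessThan image_subsetI)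
        also have "\<dots> = n - card S" using S(1) fS by (simp add: card_Diff_subset)
        finally have cU: "card U \<le> n - card S" .
        have "card U = card ?KA + card (KB - L)"
          unfolding U_def by (rule card_Un_disjoint) (use K(1) fKB in auto)
        also have "card (KB - L) = card KB - card L" using card_Diff_subset[OF fL LKB] .
        finally have "card U = card ?KA + (card KB - card L)" .
        then show False using cU cK False S(2) cSn card_mono[OF fKB LKB] dr by arith
      qed
      show ?thesis
        by (rule lowfun_cong[OF lowfun_const[of Z n m "d - 1" 0]]) (use zero in simp)
    qed
  qed
  show ?thesis using low eq by simp
qed



lemma key_mono_rows:
  assumes Z: "rookset n m r Z" and S: "S \<subseteq> {..<n}" "card S = n + m - d - r + 1"
    and dr: "d \<le> r" "r \<le> m" and d1: "1 \<le> d"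
    and a: "inrange n m a" "mdeg a = d"
  shows "lowfun Z n m (d - 1) (\<lambda>A. \<Sum>s\<in>{s. s permutes S}. mev (\<lambda>i j. A (s i) j) a)"
proof -
  let ?K = "Poly_Mapping.keys a"
  have fS: "finite S" using S finite_subset by blast
  have fP: "finite {s. s permutes S}" using finite_permutations[OF fS] .
  have Krange: "?K \<subseteq> {..<n} \<times> {..<m}" using a(1) by (auto simp: inrange_def)
  have cK: "card ?K \<le> d" using card_keys_le_mdeg[of a] a(2) by simp
  have sn: "s i < n" if "s permutes S" "i < n" for s i
    using that S(1) by (metis lessThan_iff permutes_in_image permutes_not_in subsetD)
  let ?G = "\<lambda>A. \<Sum>s\<in>{s. s permutes S}. \<Prod>v\<in>?K. A (s (fst v)) (snd v)"
  have GA: "(\<Sum>s\<in>{s. s permutes S}. mev (\<lambda>i j. A (s i) j) a) = ?G A" if A: "A \<in> Z" for A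
    by (rule sum.cong[OF refl], rule mev01) (use rooksetD(1)[OF Z A] in auto)
  have "lowfun Z n m (d - 1) ?G"
  proof (cases "card ?K < d")
    case True
    have "lowfun Z n m (card ?K) ?G"
    proof (rule lowfun_sum[OF fP])
      fix s assume "s \<in> {s. s permutes S}"
      then have s: "s permutes S" by simp
      show "lowfun Z n m (card ?K) (\<lambda>A. \<Prod>v\<in>?K. A (s (fst v)) (snd v))"
        by (rule lowfun_prod_vars) (use Krange sn[OF s] in auto)
    qed
    then show ?thesis using True lowfun_mono by simp
  next
    case False
    then have cKd: "card ?K = d" using cK by simp
    show ?thesis
    proof (cases "inj_on fst ?K \<and> inj_on snd ?K")
      case True
      define KB where "KB = {v\<in>?K. fst v \<in> S}"
      have l: "lowfun Z n m (d - 1) (\<lambda>A. (\<Prod>v\<in>?K - KB. A (fst v) (snd v)) * (\<Prod>v\<in>KB. \<Sum>i\<in>S. A i (snd v)))"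
        unfolding KB_def by (rule step2[OF Z S dr _ cKd Krange]) (use True in auto)
      show ?thesis
        by (rule lowfun_cong[OF lowfun_scale[OF l, of "of_nat (fact (card S - card KB))"]])
           (use step1[OF Z _ S(1) _ ] True in \<open>simp add: KB_def\<close>)
    next
      case False
      have z: "(\<Prod>v\<in>?K. A (s (fst v)) (snd v)) = 0" if A: "A \<in> Z" and s: "s permutes S" for A s
      proof -
        have "\<exists>v\<in>?K. A (s (fst v)) (snd v) \<noteq> 1"
        proof (rule ccontr)
          assume "\<not> ?thesis"
          then have all: "\<forall>v\<in>?K. A (s (fst v)) (snd v) = 1" by blast
          have "inj_on fst ?K"
          proof (rule inj_onI)
            fix v w assume vw: "v \<in> ?K" "w \<in> ?K" "fst v = fst w"
            then have "snd v = snd w" using all rooksetD(5)[OF Z A] by metis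
            then show "v = w" using vw by (simp add: prod_eq_iff)
          qed
          moreover have "inj_on snd ?K"
          proof (rule inj_onI)
            fix v w assume vw: "v \<in> ?K" "w \<in> ?K" "snd v = snd w"
            then have "s (fst v) = s (fst w)" using all rooksetD(6)[OF Z A] by metis
            then have "fst v = fst w" using permutes_inj[OF s] by (simp add: inj_eq)
            then show "v = w" using vw by (simp add: prod_eq_iff)
          qed
          ultimately show False using False by blast
        qed
        then obtain v where "v \<in> ?K" "A (s (fst v)) (snd v) = 0" using rooksetD(1)[OF Z A] by blast
        then show ?thesis by (intro prod_zero) auto
      qed
      show ?thesis
        by (rule lowfun_cong[OF lowfun_const[of Z n m "d - 1" 0]]) (use z in \<open>simp del: prod_zero_iff\<close>)
    qed
  qed
  then show ?thesis using GA lowfun_cong by (metis (no_types, lifting))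
qed

lemma key_poly_rows:
  assumes Z: "rookset n m r Z" and S: "S \<subseteq> {..<n}" "card S = n + m - d - r + 1"
    and dr: "d \<le> r" "r \<le> m" and d1: "1 \<le> d"
    and f: "f \<in> homog n m d"
  shows "(\<Sum>s\<in>{s. s permutes S}. pact s id f) \<in> JJ n m Z d"
proof (rule to_JJ[OF _ d1])
  have fS: "finite S" using S finite_subset by blast
  have fP: "finite {s. s permutes S}" using finite_permutations[OF fS] .
  have sp: "s permutes {..<n}" if "s permutes S" for s using that S(1) permutes_subset by blast
  show "(\<Sum>s\<in>{s. s permutes S}. pact s id f) \<in> homog n m d"
    by (rule homog_sum[OF fP]) (use pact_homog[OF _ permutes_id f] sp in auto)
  have ev: "peval A (\<Sum>s\<in>{s. s permutes S}. pact s id f) =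
     (\<Sum>a\<in>Poly_Mapping.keys f. Poly_Mapping.lookup f a * (\<Sum>s\<in>{s. s permutes S}. mev (\<lambda>i j. A (s i) j) a))" for A
  proof -
    have "peval A (\<Sum>s\<in>{s. s permutes S}. pact s id f) = (\<Sum>s\<in>{s. s permutes S}. peval (\<lambda>i j. A (s i) j) f)"
      unfolding peval_sum[OF fP]
      by (rule sum.cong[OF refl]) (simp add: peval_pact permutes_bij)
    also have "\<dots> = (\<Sum>s\<in>{s. s permutes S}. \<Sum>a\<in>Poly_Mapping.keys f. Poly_Mapping.lookup f a * mev (\<lambda>i j. A (s i) j) a)"
      by (simp add: peval_mev)
    also have "\<dots> = (\<Sum>a\<in>Poly_Mapping.keys f. Poly_Mapping.lookup f a * (\<Sum>s\<in>{s. s permutes S}. mev (\<lambda>i j. A (s i) j) a))"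
      by (subst sum.swap) (simp add: sum_distrib_left)
    finally show ?thesis .
  qed
  have "lowfun Z n m (d - 1) (\<lambda>A. \<Sum>a\<in>Poly_Mapping.keys f. Poly_Mapping.lookup f a * (\<Sum>s\<in>{s. s permutes S}. mev (\<lambda>i j. A (s i) j) a))"
  proof (rule lowfun_sum)
    fix a assume a: "a \<in> Poly_Mapping.keys f"
    have "inrange n m a" "mdeg a = d" using f a by (auto simp: homog_def polys_def inrange_def)
    then show "lowfun Z n m (d - 1) (\<lambda>A. Poly_Mapping.lookup f a * (\<Sum>s\<in>{s. s permutes S}. mev (\<lambda>i j. A (s i) j) a))"
      using lowfun_scale[OF key_mono_rows[OF Z S dr d1]] by blast
  qed simp
  then show "lowfun Z n m (d - 1) (\<lambda>A. peval A (\<Sum>s\<in>{s. s permutes S}. pact s id f))"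
    using ev by simp
qed



definition mtr :: "mono \<Rightarrow> mono" where
  "mtr a = Abs_poly_mapping (\<lambda>(i,j). Poly_Mapping.lookup a (j,i))"

definition trm :: "(nat \<Rightarrow> nat \<Rightarrow> complex) \<Rightarrow> (nat \<Rightarrow> nat \<Rightarrow> complex)" where
  "trm A = (\<lambda>i j. A j i)"

lemma mtr_lookup: "Poly_Mapping.lookup (mtr a) = (\<lambda>(i,j). Poly_Mapping.lookup a (j,i))"
proof -
  have "{x. (\<lambda>(i,j). Poly_Mapping.lookup a (j,i)) x \<noteq> 0} = prod.swap ` Poly_Mapping.keys a"
    apply (rule set_eqI) subgoal for x by (cases x) (auto simp: in_keys_iff) done
  then show ?thesis unfolding mtr_def by simp
qed

lemma mtr_keys: "Poly_Mapping.keys (mtr a) = prod.swap ` Poly_Mapping.keys a"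
  apply (rule set_eqI) subgoal for x by (cases x) (auto simp: in_keys_iff mtr_lookup) done

lemma mtr_mtr [simp]: "mtr (mtr a) = a"
  by (rule poly_mapping_eqI) (simp add: mtr_lookup split_beta)

lemma mev_mtr: "mev A (mtr a) = mev (trm A) a"
proof -
  have "mev A (mtr a) = (\<Prod>v\<in>prod.swap ` Poly_Mapping.keys a. A (fst v) (snd v) ^ Poly_Mapping.lookup a (prod.swap v))"
    unfolding mev_def mtr_keys mtr_lookup by (simp add: split_beta prod.swap_def)
  also have "\<dots> = mev (trm A) a"
    by (subst prod.reindex) (auto simp: mev_def trm_def)
  finally show ?thesis .
qed

lemma mdeg_mtr: "mdeg (mtr a) = mdeg a"
  unfolding mdeg_def mtr_keys mtr_lookup by (subst sum.reindex) (auto simp: split_beta)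

lemma inrange_mtr: "inrange n m a \<Longrightarrow> inrange m n (mtr a)"
  by (auto simp: inrange_def mtr_keys)

lemma lowfun_transfer:
  assumes "lowfun (trm ` Z) m n k F"
  shows "lowfun Z n m k (\<lambda>A. F (trm A))"
proof -
  obtain M c where M: "finite M" "\<forall>a\<in>M. mdeg a \<le> k \<and> inrange m n a"
      "\<forall>B\<in>trm ` Z. F B = (\<Sum>a\<in>M. c a * mev B a)"
    using assms unfolding lowfun_def by blast
  have inj: "inj_on mtr M" by (metis inj_onI mtr_mtr)
  have "\<forall>A\<in>Z. F (trm A) = (\<Sum>b\<in>mtr ` M. c (mtr b) * mev A b)"
    using M(3) by (subst sum.reindex[OF inj]) (simp add: mev_mtr)
  moreover have "\<forall>b\<in>mtr ` M. mdeg b \<le> k \<and> inrange n m b"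
    using M(2) inrange_mtr mdeg_mtr by fastforce
  ultimately show ?thesis unfolding lowfun_def using M(1)
    by (intro exI[of _ "mtr ` M"] exI[of _ "\<lambda>b. c (mtr b)"]) auto
qed

lemma rookset_trm:
  assumes "rookset n m r Z"
  shows "rookset m n r (trm ` Z)"
  unfolding rookset_def
proof (intro ballI conjI allI impI)
  fix B assume "B \<in> trm ` Z"
  then obtain A where A: "A \<in> Z" "B = trm A" by blast
  note R = rooksetD[OF assms A(1)]
  show "B i j = 0 \<or> B i j = 1" for i j using R(1) A(2) by (simp add: trm_def)
  show "B i j = 0" if "m \<le> i \<or> n \<le> j" for i j using that R(2,3) A(2) by (auto simp: trm_def)
  have "{(i,j). i < m \<and> j < n \<and> B i j = 1} = prod.swap ` {(i,j). i < n \<and> j < m \<and> A i j = 1}"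
    using A(2) by (auto simp: trm_def image_iff)
  then show "card {(i,j). i < m \<and> j < n \<and> B i j = 1} = r"
    using R(4) by (simp add: card_image)
  show "j = j'" if "B i j = 1 \<and> B i j' = 1" for i j j' using that R(6) A(2) by (auto simp: trm_def)
  show "i = i'" if "B i j = 1 \<and> B i' j = 1" for i i' j using that R(5) A(2) by (auto simp: trm_def)
qed

lemma key_mono_cols:
  assumes Z: "rookset n m r Z" and S: "S \<subseteq> {..<m}" "card S = n + m - d - r + 1"
    and dr: "d \<le> r" "r \<le> n" and d1: "1 \<le> d"
    and a: "inrange n m a" "mdeg a = d"
  shows "lowfun Z n m (d - 1) (\<lambda>A. \<Sum>s\<in>{s. s permutes S}. mev (\<lambda>i j. A i (s j)) a)"
proof -
  have S': "card S = m + n - d - r + 1" using S(2) by (simp add: add.commute)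
  have "lowfun (trm ` Z) m n (d - 1) (\<lambda>B. \<Sum>s\<in>{s. s permutes S}. mev (\<lambda>i j. B (s i) j) (mtr a))"
    by (rule key_mono_rows[OF rookset_trm[OF Z] S(1) S' dr d1 inrange_mtr[OF a(1)]]) (simp add: mdeg_mtr a(2))
  from lowfun_transfer[OF this] show ?thesis
    by (simp add: mev_mtr trm_def)
qed

lemma key_poly_cols:
  assumes Z: "rookset n m r Z" and S: "S \<subseteq> {..<m}" "card S = n + m - d - r + 1"
    and dr: "d \<le> r" "r \<le> n" and d1: "1 \<le> d"
    and f: "f \<in> homog n m d"
  shows "(\<Sum>s\<in>{s. s permutes S}. pact id s f) \<in> JJ n m Z d"
proof (rule to_JJ[OF _ d1])
  have fS: "finite S" using S finite_subset by blast
  have fP: "finite {s. s permutes S}" using finite_permutations[OF fS] .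
  have sp: "s permutes {..<m}" if "s permutes S" for s using that S(1) permutes_subset by blast
  show "(\<Sum>s\<in>{s. s permutes S}. pact id s f) \<in> homog n m d"
    by (rule homog_sum[OF fP]) (use pact_homog[OF permutes_id _ f] sp in auto)
  have ev: "peval A (\<Sum>s\<in>{s. s permutes S}. pact id s f) =
     (\<Sum>a\<in>Poly_Mapping.keys f. Poly_Mapping.lookup f a * (\<Sum>s\<in>{s. s permutes S}. mev (\<lambda>i j. A i (s j)) a))" for A
  proof -
    have "peval A (\<Sum>s\<in>{s. s permutes S}. pact id s f) = (\<Sum>s\<in>{s. s permutes S}. peval (\<lambda>i j. A i (s j)) f)"
      unfolding peval_sum[OF fP]
      by (rule sum.cong[OF refl]) (simp add: peval_pact permutes_bij)
    also have "\<dots> = (\<Sum>s\<in>{s. s permutes S}. \<Sum>a\<in>Poly_Mapping.keys f. Poly_Mapping.lookup f a * mev (\<lambda>i j. A i (s j)) a)"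
      by (simp add: peval_mev)
    also have "\<dots> = (\<Sum>a\<in>Poly_Mapping.keys f. Poly_Mapping.lookup f a * (\<Sum>s\<in>{s. s permutes S}. mev (\<lambda>i j. A i (s j)) a))"
      by (subst sum.swap) (simp add: sum_distrib_left)
    finally show ?thesis .
  qed
  have "lowfun Z n m (d - 1) (\<lambda>A. \<Sum>a\<in>Poly_Mapping.keys f. Poly_Mapping.lookup f a * (\<Sum>s\<in>{s. s permutes S}. mev (\<lambda>i j. A i (s j)) a))"
  proof (rule lowfun_sum)
    fix a assume a: "a \<in> Poly_Mapping.keys f"
    have "inrange n m a" "mdeg a = d" using f a by (auto simp: homog_def polys_def inrange_def)
    then show "lowfun Z n m (d - 1) (\<lambda>A. Poly_Mapping.lookup f a * (\<Sum>s\<in>{s. s permutes S}. mev (\<lambda>i j. A i (s j)) a))"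
      using lowfun_scale[OF key_mono_cols[OF Z S dr d1]] by blast
  qed simp
  then show "lowfun Z n m (d - 1) (\<lambda>A. peval A (\<Sum>s\<in>{s. s permutes S}. pact id s f))"
    using ev by simp
qed



lemma young_eq: "young_diagram la = (\<Union>i\<in>{..<length la}. {i} \<times> {..<la ! i})"
  by (auto simp: young_diagram_def)

lemma finite_young: "finite (young_diagram la)"
  unfolding young_eq by auto

lemma card_young: "card (young_diagram la) = sum_list la"
proof -
  have "card (young_diagram la) = (\<Sum>i\<in>{..<length la}. card ({i} \<times> {..<la ! i}))"
    unfolding young_eq by (rule card_UN_disjoint) auto
  also have "\<dots> = (\<Sum>i\<in>{..<length la}. la ! i)" by (simp add: card_cartesian_product)
  also have "\<dots> = sum_list la" by (simp add: sum_list_sum_nth atLeast0LessThan)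
  finally show ?thesis .
qed

lemma tableau_exists: "is_partition n la \<Longrightarrow> \<exists>T. tableau n la T"
  unfolding tableau_def is_partition_def
  using finite_same_card_bij[OF finite_young, of "{..<n}" la] card_young by auto

lemma cell_of_T:
  assumes T: "tableau n la T" and i: "i < n"
  shows "cell_of la T i \<in> young_diagram la" "T (cell_of la T i) = i"
  using T i unfolding tableau_def cell_of_def
  by (auto simp: bij_betw_def inv_into_into f_inv_into_f)

lemma cell_of_inj:
  assumes T: "tableau n la T" and "i < n" "j < n" "cell_of la T i = cell_of la T j"
  shows "i = j"
  using cell_of_T[OF T] assms(2-4) by metis

lemma cell_of_Tc:
  assumes T: "tableau n la T" and c: "c \<in> young_diagram la"
  shows "cell_of la T (T c) = c"
  using T c unfolding tableau_def cell_of_def by (simp add: bij_betw_def)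

lemma tableau_comp:
  assumes T: "tableau n la T" and s: "s permutes {..<n}"
  shows "tableau n la (s \<circ> T)"
  using T permutes_imp_bij[OF s] unfolding tableau_def by (rule bij_betw_trans)

lemma cell_of_comp:
  assumes T: "tableau n la T" and s: "s permutes {..<n}" and i: "i < n"
  shows "cell_of la (s \<circ> T) i = cell_of la T (inv s i)"
proof -
  have T': "tableau n la (s \<circ> T)" using tableau_comp[OF T s] .
  have isn: "inv s i < n" using s i by (metis lessThan_iff permutes_inv permutes_in_image)
  have "(s \<circ> T) (cell_of la T (inv s i)) = i"
    using cell_of_T(2)[OF T isn] permutes_inverses(1)[OF s] by simp
  then show ?thesis
    unfolding cell_of_def[of la "s \<circ> T"]
    using T' cell_of_T(1)[OF T isn] unfolding tableau_def
    by (intro inv_into_f_eq) (auto simp: bij_betw_def)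
qed

lemma tabloid_comp:
  assumes T: "tableau n la T" and s: "s permutes {..<n}"
  shows "tabloid_of n la (s \<circ> T) = tabloid_of n la T \<circ> inv s"
proof
  fix i
  have iff: "inv s i < n \<longleftrightarrow> i < n" using s
    by (metis lessThan_iff permutes_inv permutes_in_image permutes_inverses(1))
  show "tabloid_of n la (s \<circ> T) i = (tabloid_of n la T \<circ> inv s) i"
    using cell_of_comp[OF T s] iff by (simp add: tabloid_of_def)
qed

lemma col_group_comp:
  assumes T: "tableau n la T" and s: "s permutes {..<n}"
  shows "col_group n la (s \<circ> T) = (\<lambda>p. s \<circ> p \<circ> inv s) ` col_group n la T"
proof -
  have si: "inv s permutes {..<n}" using permutes_inv[OF s] .
  have sin: "s i < n" if "i < n" for i using s that by (metis lessThan_iff permutes_in_image)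
  have isn: "inv s i < n" if "i < n" for i using si that by (metis lessThan_iff permutes_in_image)
  have ss: "s (inv s x) = x" "inv s (s x) = x" for x using permutes_inverses[OF s] by auto
  show ?thesis
  proof (intro equalityI subsetI)
    fix q assume "q \<in> col_group n la (s \<circ> T)"
    then have q: "q permutes {..<n}" "\<forall>i<n. snd (cell_of la (s \<circ> T) (q i)) = snd (cell_of la (s \<circ> T) i)"
      by (auto simp: col_group_def)
    define p where "p = inv s \<circ> q \<circ> s"
    have pp: "p permutes {..<n}" unfolding p_def using q(1) s si by (simp add: permutes_compose)
    have "\<forall>j<n. snd (cell_of la T (p j)) = snd (cell_of la T j)"
    proof (intro allI impI)
      fix j assume j: "j < n"
      have qn: "q (s j) < n" using q(1) sin[OF j] by (metis lessThan_iff permutes_in_image)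
      have "snd (cell_of la (s \<circ> T) (q (s j))) = snd (cell_of la (s \<circ> T) (s j))" using q(2) sin[OF j] by blast
      then show "snd (cell_of la T (p j)) = snd (cell_of la T j)"
        using cell_of_comp[OF T s qn] cell_of_comp[OF T s sin[OF j]] by (simp add: p_def ss)
    qed
    then have "p \<in> col_group n la T" using pp by (simp add: col_group_def)
    moreover have "q = s \<circ> p \<circ> inv s" by (simp add: p_def fun_eq_iff ss)
    ultimately show "q \<in> (\<lambda>p. s \<circ> p \<circ> inv s) ` col_group n la T" by blast
  next
    fix q assume "q \<in> (\<lambda>p. s \<circ> p \<circ> inv s) ` col_group n la T"
    then obtain p where p: "p \<in> col_group n la T" "q = s \<circ> p \<circ> inv s" by blast
    then have pp: "p permutes {..<n}" "\<forall>j<n. snd (cell_of la T (p j)) = snd (cell_of la T j)"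
      by (auto simp: col_group_def)
    have qp: "q permutes {..<n}" using p(2) pp(1) s si by (simp add: permutes_compose)
    have "\<forall>i<n. snd (cell_of la (s \<circ> T) (q i)) = snd (cell_of la (s \<circ> T) i)"
    proof (intro allI impI)
      fix i assume i: "i < n"
      have qn: "q i < n" using qp i by (metis lessThan_iff permutes_in_image)
      have "snd (cell_of la T (p (inv s i))) = snd (cell_of la T (inv s i))" using pp(2) isn[OF i] by blast
      then show "snd (cell_of la (s \<circ> T) (q i)) = snd (cell_of la (s \<circ> T) i)"
        using cell_of_comp[OF T s qn] cell_of_comp[OF T s i] by (simp add: p(2) ss)
    qed
    then show "q \<in> col_group n la (s \<circ> T)" using qp by (simp add: col_group_def)
  qed
qed

lemma polytabloid_comp:
  assumes T: "tableau n la T" and s: "s permutes {..<n}"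
  shows "polytabloid n la (s \<circ> T) t = polytabloid n la T (t \<circ> s)"
proof -
  have bs: "bij s" using permutes_bij[OF s] .
  have ss: "s (inv s x) = x" "inv s (s x) = x" for x using permutes_inverses[OF s] by auto
  have injc: "inj_on (\<lambda>p. s \<circ> p \<circ> inv s) (col_group n la T)"
  proof (rule inj_onI)
    fix p q assume "s \<circ> p \<circ> inv s = s \<circ> q \<circ> inv s"
    then have "inv s \<circ> (s \<circ> p \<circ> inv s) \<circ> s = inv s \<circ> (s \<circ> q \<circ> inv s) \<circ> s" by simp
    then show "p = q" by (simp add: fun_eq_iff ss)
  qed
  have tm: "(if t = tabloid_of n la (s \<circ> T) \<circ> inv (s \<circ> p \<circ> inv s) then of_int (sign (s \<circ> p \<circ> inv s)) else 0)
      = (if t \<circ> s = tabloid_of n la T \<circ> inv p then of_int (sign p) else (0::complex))"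
    if p: "p \<in> col_group n la T" for p
  proof -
    have pp: "p permutes {..<n}" using p by (simp add: col_group_def)
    have bp: "bij p" using permutes_bij[OF pp] .
    have bis: "bij (inv s)" using bs by (simp add: bij_imp_bij_inv)
    have inv1: "inv (s \<circ> p \<circ> inv s) = s \<circ> inv p \<circ> inv s"
      using bs bp bis by (simp add: o_inv_distrib bij_comp inv_inv_eq o_assoc)
    have eq1: "tabloid_of n la (s \<circ> T) \<circ> inv (s \<circ> p \<circ> inv s) = tabloid_of n la T \<circ> inv p \<circ> inv s"
      unfolding tabloid_comp[OF T s] inv1 by (simp add: fun_eq_iff ss)
    have eq2: "(t = tabloid_of n la T \<circ> inv p \<circ> inv s) \<longleftrightarrow> (t \<circ> s = tabloid_of n la T \<circ> inv p)"
    proof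
      assume "t = tabloid_of n la T \<circ> inv p \<circ> inv s"
      then show "t \<circ> s = tabloid_of n la T \<circ> inv p" by (simp add: fun_eq_iff ss)
    next
      assume h: "t \<circ> s = tabloid_of n la T \<circ> inv p"
      show "t = tabloid_of n la T \<circ> inv p \<circ> inv s"
      proof
        fix x have "t x = (t \<circ> s) (inv s x)" by (simp add: ss)
        then show "t x = (tabloid_of n la T \<circ> inv p \<circ> inv s) x" using h by simp
      qed
    qed
    have perm_s: "permutation s" using s by (auto simp: permutation_permutes)
    have perm_p: "permutation p" using pp by (auto simp: permutation_permutes)
    have perm_is: "permutation (inv s)" using permutation_inverse[OF perm_s] .
    have "sign (s \<circ> p \<circ> inv s) = sign s * sign p * sign (inv s)"
      using perm_s perm_p perm_is by (simp add: sign_compose permutation_compose)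
    also have "\<dots> = sign p" using sign_inverse[OF perm_s] by (simp add: mult_ac)
    finally show ?thesis using eq1 eq2 by simp
  qed
  have "polytabloid n la (s \<circ> T) t = (\<Sum>q\<in>(\<lambda>p. s \<circ> p \<circ> inv s) ` col_group n la T.
      if t = tabloid_of n la (s \<circ> T) \<circ> inv q then of_int (sign q) else 0)"
    unfolding polytabloid_def col_group_comp[OF T s] ..
  also have "\<dots> = (\<Sum>p\<in>col_group n la T. if t \<circ> s = tabloid_of n la T \<circ> inv p then of_int (sign p) else 0)"
    by (subst sum.reindex[OF injc]) (simp add: tm)
  finally show ?thesis by (simp add: polytabloid_def)
qed

lemma polytabloid_self:
  assumes T: "tableau n la T"
  shows "polytabloid n la T (tabloid_of n la T) = 1"
proof -
  have idc: "id \<in> col_group n la T" by (simp add: col_group_def)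
  have only: "p = id" if p: "p \<in> col_group n la T" "tabloid_of n la T = tabloid_of n la T \<circ> inv p" for p
  proof -
    have pp: "p permutes {..<n}" and pc: "\<forall>i<n. snd (cell_of la T (p i)) = snd (cell_of la T i)"
      using p(1) by (auto simp: col_group_def)
    have ipp: "inv p permutes {..<n}" using permutes_inv[OF pp] .
    have "inv p i = i" for i
    proof (cases "i < n")
      case True
      have qn: "inv p i < n" using ipp True by (metis lessThan_iff permutes_in_image)
      have f: "fst (cell_of la T i) = fst (cell_of la T (inv p i))"
        using fun_cong[OF p(2), of i] True qn by (simp add: tabloid_of_def)
      have "snd (cell_of la T (p (inv p i))) = snd (cell_of la T (inv p i))" using pc qn by blast
      then have "snd (cell_of la T i) = snd (cell_of la T (inv p i))"
        using permutes_inverses(1)[OF pp] by simp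
      then have "cell_of la T i = cell_of la T (inv p i)" using f by (simp add: prod_eq_iff)
      then show ?thesis using cell_of_inj[OF T True qn] by simp
    next
      case False then show ?thesis using ipp by (simp add: permutes_not_in)
    qed
    then have "inv p = id" by (simp add: fun_eq_iff)
    then show "p = id" using pp by (metis inv_id inv_inv_eq permutes_bij)
  qed
  have "polytabloid n la T (tabloid_of n la T) =
      (\<Sum>p\<in>col_group n la T. if p = id then of_int (sign p) else 0)"
    unfolding polytabloid_def by (rule sum.cong[OF refl]) (use only in auto)
  also have "\<dots> = 1"
  proof -
    have "col_group n la T \<subseteq> {p. p permutes {..<n}}" by (auto simp: col_group_def)
    then have "finite (col_group n la T)" using finite_permutations[of "{..<n}"] finite_subset by blast
    then show ?thesis using idc by (simp add: sum.delta')
  qed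
  finally show ?thesis .
qed

lemma cspan_zero: "(\<lambda>_. 0) \<in> cspan S"
  unfolding cspan_def by (rule CollectI, rule exI[of _ "{}"]) auto

lemma cspan_gen: "g \<in> S \<Longrightarrow> g \<in> cspan S"
  unfolding cspan_def by (rule CollectI, rule exI[of _ "{g}"], rule exI[of _ "\<lambda>_. 1"]) auto

lemma cspan_lin:
  assumes "x \<in> cspan S" "y \<in> cspan S"
  shows "(\<lambda>z. a * x z + b * y z) \<in> cspan S"
proof -
  obtain F1 c1 where h1: "finite F1" "F1 \<subseteq> S" "x = (\<lambda>z. \<Sum>g\<in>F1. c1 g * g z)"
    using assms(1) unfolding cspan_def by blast
  obtain F2 c2 where h2: "finite F2" "F2 \<subseteq> S" "y = (\<lambda>z. \<Sum>g\<in>F2. c2 g * g z)"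
    using assms(2) unfolding cspan_def by blast
  let ?c = "\<lambda>g. a * (if g \<in> F1 then c1 g else 0) + b * (if g \<in> F2 then c2 g else 0)"
  have "(\<lambda>z. a * x z + b * y z) = (\<lambda>z. \<Sum>g\<in>F1\<union>F2. ?c g * g z)"
  proof
    fix z
    have e1: "(\<Sum>g\<in>F1\<union>F2. (if g \<in> F1 then c1 g else 0) * g z) = (\<Sum>g\<in>F1. c1 g * g z)"
      using h1 h2 by (intro sum.mono_neutral_cong_right) auto
    have e2: "(\<Sum>g\<in>F1\<union>F2. (if g \<in> F2 then c2 g else 0) * g z) = (\<Sum>g\<in>F2. c2 g * g z)"
      using h1 h2 by (intro sum.mono_neutral_cong_right) auto
    have "(\<Sum>g\<in>F1\<union>F2. ?c g * g z) = a * (\<Sum>g\<in>F1\<union>F2. (if g \<in> F1 then c1 g else 0) * g z)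
        + b * (\<Sum>g\<in>F1\<union>F2. (if g \<in> F2 then c2 g else 0) * g z)"
      by (simp add: distrib_right sum.distrib sum_distrib_left mult.assoc)
    then show "a * x z + b * y z = (\<Sum>g\<in>F1\<union>F2. ?c g * g z)"
      using e1 e2 h1(3) h2(3) by simp
  qed
  then show ?thesis unfolding cspan_def using h1 h2
    by (intro CollectI exI[of _ "F1 \<union> F2"] exI[of _ ?c]) auto
qed



lemma smult_one [simp]: "smult 1 p = p"
  by (rule poly_mapping_eqI) (simp add: smult_def map.rep_eq when_def)

lemma smult_zero [simp]: "smult 0 p = 0"
  by (rule poly_mapping_eqI) (simp add: smult_def map.rep_eq when_def)

lemma phi_sum:
  assumes lin: "\<forall>x\<in>W. \<forall>y\<in>W. \<forall>a b. phi (\<lambda>z. a * x z + b * y z) = smult a (phi x) + smult b (phi y)"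
    and W: "W = cspan G" and fI: "finite I" and w: "\<And>i. i \<in> I \<Longrightarrow> w i \<in> W"
  shows "(\<lambda>z. \<Sum>i\<in>I. w i z) \<in> W \<and> phi (\<lambda>z. \<Sum>i\<in>I. w i z) = (\<Sum>i\<in>I. phi (w i))"
  using fI w
proof (induction I rule: finite_induct)
  case empty
  have z: "(\<lambda>_. 0) \<in> W" using W cspan_zero by simp
  show ?case using spec[OF spec[OF bspec[OF bspec[OF lin z] z]], of 0 0] z by simp
next
  case (insert x I)
  then have ih: "(\<lambda>z. \<Sum>i\<in>I. w i z) \<in> W" "phi (\<lambda>z. \<Sum>i\<in>I. w i z) = (\<Sum>i\<in>I. phi (w i))" by auto
  have wx: "w x \<in> W" using insert by simp
  have "(\<lambda>z. 1 * w x z + 1 * (\<lambda>z. \<Sum>i\<in>I. w i z) z) \<in> W" using cspan_lin W wx ih(1) by blast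
  moreover note spec[OF spec[OF bspec[OF bspec[OF lin wx] ih(1)]], of 1 1]
  ultimately show ?case using insert ih by simp
qed

lemma rookset_rp: "rookset n m r (rook_placements n m r)"
  unfolding rookset_def rook_placements_def by auto

lemma hd_le:
  assumes "is_partition n la" "0 < n"
  shows "la \<noteq> []" "hd la \<le> n" "hd la = la ! 0"
proof -
  show ne: "la \<noteq> []" using assms by (auto simp: is_partition_def)
  show "hd la \<le> n" using assms ne member_le_sum_list[of "hd la" la] by (simp add: is_partition_def)
  show "hd la = la ! 0" using ne by (simp add: hd_conv_nth)
qed

lemma row_bound:
  fixes n m r d :: nat and la mu :: "nat list"
  assumes n0: "0 < n" and dr: "d \<le> r" "r \<le> min n m"
    and pla: "is_partition n la" and T: "tableau n la T" and U: "tableau m mu U"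
    and homg: "\<forall>w\<in>specht_pair n m la mu. phi w \<in> homog n m d"
    and lin: "\<forall>x\<in>specht_pair n m la mu. \<forall>y\<in>specht_pair n m la mu. \<forall>a b.
          phi (\<lambda>z. a * x z + b * y z) = smult a (phi x) + smult b (phi y)"
    and eqv: "\<forall>g h. g permutes {..<n} \<and> h permutes {..<m} \<longrightarrow>
          (\<forall>w\<in>specht_pair n m la mu. phi (wact g h w) - pact g h (phi w) \<in> JJ n m (rook_placements n m r) d)"
    and inj: "\<forall>w\<in>specht_pair n m la mu. phi w \<in> JJ n m (rook_placements n m r) d \<longrightarrow> w = (\<lambda>_. 0)"
  shows "hd la \<le> n + m - d - r"
proof (rule ccontr)
  assume "\<not> ?thesis"
  then have big: "n + m - d - r + 1 \<le> hd la" by simp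
  let ?N = "n + m - d - r"
  let ?W = "specht_pair n m la mu"
  let ?Z = "rook_placements n m r"
  let ?J = "JJ n m ?Z d"
  have hl: "la \<noteq> []" "hd la \<le> n" "hd la = la ! 0" using hd_le[OF pla n0] by auto
  have d1: "1 \<le> d" using big hl(2) dr by linarith
  define G where "G = {(\<lambda>(t,u). polytabloid n la T t * polytabloid m mu U u) | T U.
        tableau n la T \<and> tableau m mu U}"
  have WG: "?W = cspan G" by (simp add: specht_pair_def G_def)
  define e where "e = (\<lambda>(t::nat \<Rightarrow> nat, u::nat \<Rightarrow> nat). polytabloid n la T t * polytabloid m mu U u)"
  have eW: "e \<in> ?W" unfolding WG by (rule cspan_gen) (use T U in \<open>auto simp: G_def e_def\<close>)
  define S where "S = (\<lambda>j. T (0, j)) ` {..<?N + 1}"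
  have cells: "(0, j) \<in> young_diagram la" if "j < ?N + 1" for j
    using that big hl by (auto simp: young_diagram_def)
  have Tinj: "inj_on T (young_diagram la)" and Timg: "T ` young_diagram la = {..<n}"
    using T by (auto simp: tableau_def bij_betw_def)
  have cS: "card S = ?N + 1" unfolding S_def
    by (subst card_image) (use cells Tinj in \<open>auto simp: inj_on_def\<close>)
  have Sn: "S \<subseteq> {..<n}" unfolding S_def using cells Timg by blast
  have fS: "finite S" using Sn finite_subset by blast
  let ?P = "{s. s permutes S}"
  have fP: "finite ?P" using finite_permutations[OF fS] .
  have spn: "s permutes {..<n}" if "s \<in> ?P" for s using that Sn permutes_subset by blast
  define t0 where "t0 = tabloid_of n la T"
  have t0S: "t0 x = 0" if xS: "x \<in> S" for x
  proof -
    obtain j where j: "j < ?N + 1" "x = T (0, j)" using xS unfolding S_def by blast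
    have "x < n" using xS Sn by auto
    then show ?thesis using cell_of_Tc[OF T cells[OF j(1)]] j by (simp add: t0_def tabloid_of_def)
  qed
  have t0s: "t0 \<circ> s = t0" if "s \<in> ?P" for s
  proof
    fix x
    have sp: "s permutes S" using that by simp
    show "(t0 \<circ> s) x = t0 x"
    proof (cases "x \<in> S")
      case True then show ?thesis using t0S permutes_in_image[OF sp] by simp
    next
      case False then show ?thesis using permutes_not_in[OF sp] by simp
    qed
  qed
  define w where "w = (\<lambda>s. wact s id e)"
  have wW: "w s \<in> ?W" if "s \<in> ?P" for s
  proof -
    have "w s = (\<lambda>(t,u). polytabloid n la (s \<circ> T) t * polytabloid m mu U u)"
      using polytabloid_comp[OF T spn[OF that]] by (simp add: w_def wact_def e_def fun_eq_iff)
    moreover have "tableau n la (s \<circ> T)" using tableau_comp[OF T spn[OF that]] .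
    ultimately show ?thesis unfolding WG by (intro cspan_gen) (use U in \<open>auto simp: G_def\<close>)
  qed
  define ws where "ws = (\<lambda>z. \<Sum>s\<in>?P. w s z)"
  have wsW: "ws \<in> ?W" and phiws: "phi ws = (\<Sum>s\<in>?P. phi (w s))"
    using phi_sum[OF lin WG fP, of w] wW by (auto simp: ws_def)
  have d_in: "phi (w s) - pact s id (phi e) \<in> ?J" if "s \<in> ?P" for s
    using eqv spn[OF that] eW by (simp add: w_def)
  have key: "(\<Sum>s\<in>?P. pact s id (phi e)) \<in> ?J"
    by (rule key_poly_rows[OF rookset_rp Sn cS dr(1) _ d1]) (use dr homg eW in auto)
  have "phi ws = (\<Sum>s\<in>?P. phi (w s) - pact s id (phi e)) + (\<Sum>s\<in>?P. pact s id (phi e))"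
    unfolding phiws by (simp add: sum_subtractf)
  also have "\<dots> \<in> ?J" by (rule JJ_add[OF JJ_sum[OF fP d_in] key])
  finally have "ws = (\<lambda>_. 0)" using inj wsW by blast
  moreover have "ws (t0, tabloid_of m mu U) = of_nat (card ?P)"
  proof -
    have "ws (t0, tabloid_of m mu U) = (\<Sum>s\<in>?P. 1)"
      unfolding ws_def w_def wact_def e_def
      by (rule sum.cong[OF refl]) (simp add: t0s t0_def[symmetric] polytabloid_self[OF U] polytabloid_self[OF T, folded t0_def])
    then show ?thesis by simp
  qed
  moreover have "card ?P \<noteq> 0" using card_permutations[OF refl fS] by simp
  ultimately show False by (metis of_nat_eq_0_iff)
qed

lemma col_bound:
  fixes n m r d :: nat and la mu :: "nat list"
  assumes m0: "0 < m" and dr: "d \<le> r" "r \<le> min n m"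
    and pmu: "is_partition m mu" and T: "tableau n la T" and U: "tableau m mu U"
    and homg: "\<forall>w\<in>specht_pair n m la mu. phi w \<in> homog n m d"
    and lin: "\<forall>x\<in>specht_pair n m la mu. \<forall>y\<in>specht_pair n m la mu. \<forall>a b.
          phi (\<lambda>z. a * x z + b * y z) = smult a (phi x) + smult b (phi y)"
    and eqv: "\<forall>g h. g permutes {..<n} \<and> h permutes {..<m} \<longrightarrow>
          (\<forall>w\<in>specht_pair n m la mu. phi (wact g h w) - pact g h (phi w) \<in> JJ n m (rook_placements n m r) d)"
    and inj: "\<forall>w\<in>specht_pair n m la mu. phi w \<in> JJ n m (rook_placements n m r) d \<longrightarrow> w = (\<lambda>_. 0)"
  shows "hd mu \<le> n + m - d - r"
proof (rule ccontr)
  assume "\<not> ?thesis"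
  then have big: "n + m - d - r + 1 \<le> hd mu" by simp
  let ?N = "n + m - d - r"
  let ?W = "specht_pair n m la mu"
  let ?Z = "rook_placements n m r"
  let ?J = "JJ n m ?Z d"
  have hl: "mu \<noteq> []" "hd mu \<le> m" "hd mu = mu ! 0" using hd_le[OF pmu m0] by auto
  have d1: "1 \<le> d" using big hl(2) dr by linarith
  define G where "G = {(\<lambda>(t,u). polytabloid n la T t * polytabloid m mu U u) | T U.
        tableau n la T \<and> tableau m mu U}"
  have WG: "?W = cspan G" by (simp add: specht_pair_def G_def)
  define e where "e = (\<lambda>(t::nat \<Rightarrow> nat, u::nat \<Rightarrow> nat). polytabloid n la T t * polytabloid m mu U u)"
  have eW: "e \<in> ?W" unfolding WG by (rule cspan_gen) (use T U in \<open>auto simp: G_def e_def\<close>)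
  define S where "S = (\<lambda>j. U (0, j)) ` {..<?N + 1}"
  have cells: "(0, j) \<in> young_diagram mu" if "j < ?N + 1" for j
    using that big hl by (auto simp: young_diagram_def)
  have Tinj: "inj_on U (young_diagram mu)" and Timg: "U ` young_diagram mu = {..<m}"
    using U by (auto simp: tableau_def bij_betw_def)
  have cS: "card S = ?N + 1" unfolding S_def
    by (subst card_image) (use cells Tinj in \<open>auto simp: inj_on_def\<close>)
  have Sn: "S \<subseteq> {..<m}" unfolding S_def using cells Timg by blast
  have fS: "finite S" using Sn finite_subset by blast
  let ?P = "{s. s permutes S}"
  have fP: "finite ?P" using finite_permutations[OF fS] .
  have spn: "s permutes {..<m}" if "s \<in> ?P" for s using that Sn permutes_subset by blast
  define t0 where "t0 = tabloid_of m mu U"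
  have t0S: "t0 x = 0" if xS: "x \<in> S" for x
  proof -
    obtain j where j: "j < ?N + 1" "x = U (0, j)" using xS unfolding S_def by blast
    have "x < m" using xS Sn by auto
    then show ?thesis using cell_of_Tc[OF U cells[OF j(1)]] j by (simp add: t0_def tabloid_of_def)
  qed
  have t0s: "t0 \<circ> s = t0" if "s \<in> ?P" for s
  proof
    fix x
    have sp: "s permutes S" using that by simp
    show "(t0 \<circ> s) x = t0 x"
    proof (cases "x \<in> S")
      case True then show ?thesis using t0S permutes_in_image[OF sp] by simp
    next
      case False then show ?thesis using permutes_not_in[OF sp] by simp
    qed
  qed
  define w where "w = (\<lambda>s. wact id s e)"
  have wW: "w s \<in> ?W" if "s \<in> ?P" for s
  proof -
    have "w s = (\<lambda>(t,u). polytabloid n la T t * polytabloid m mu (s \<circ> U) u)"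
      using polytabloid_comp[OF U spn[OF that]] by (simp add: w_def wact_def e_def fun_eq_iff)
    moreover have "tableau m mu (s \<circ> U)" using tableau_comp[OF U spn[OF that]] .
    ultimately show ?thesis unfolding WG by (intro cspan_gen) (use T in \<open>auto simp: G_def\<close>)
  qed
  define ws where "ws = (\<lambda>z. \<Sum>s\<in>?P. w s z)"
  have wsW: "ws \<in> ?W" and phiws: "phi ws = (\<Sum>s\<in>?P. phi (w s))"
    using phi_sum[OF lin WG fP, of w] wW by (auto simp: ws_def)
  have d_in: "phi (w s) - pact id s (phi e) \<in> ?J" if "s \<in> ?P" for s
    using eqv spn[OF that] eW by (simp add: w_def)
  have key: "(\<Sum>s\<in>?P. pact id s (phi e)) \<in> ?J"
    by (rule key_poly_cols[OF rookset_rp Sn cS dr(1) _ d1]) (use dr homg eW in auto)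
  have "phi ws = (\<Sum>s\<in>?P. phi (w s) - pact id s (phi e)) + (\<Sum>s\<in>?P. pact id s (phi e))"
    unfolding phiws by (simp add: sum_subtractf)
  also have "\<dots> \<in> ?J" by (rule JJ_add[OF JJ_sum[OF fP d_in] key])
  finally have "ws = (\<lambda>_. 0)" using inj wsW by blast
  moreover have "ws (tabloid_of n la T, t0) = of_nat (card ?P)"
  proof -
    have "ws (tabloid_of n la T, t0) = (\<Sum>s\<in>?P. 1)"
      unfolding ws_def w_def wact_def e_def
      by (rule sum.cong[OF refl]) (simp add: t0s t0_def[symmetric] polytabloid_self[OF T] polytabloid_self[OF U, folded t0_def])
    then show ?thesis by simp
  qed
  moreover have "card ?P \<noteq> 0" using card_permutations[OF refl fS] by simp
  ultimately show False by (metis of_nat_eq_0_iff)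
qed

theorem mainTheorem8:
  fixes n m r d :: nat and la mu :: "nat list"
  assumes "0 < n" and "0 < m"
    and "d \<le> r" and "r \<le> min n m"
    and "is_partition n la" and "is_partition m mu"
    and "occurs_in_R n m (rook_placements n m r) d la mu"
  shows "hd la \<le> n + m - d - r \<and> hd mu \<le> n + m - d - r"
proof -
  obtain T where T: "tableau n la T" using tableau_exists[OF assms(5)] by blast
  obtain U where U: "tableau m mu U" using tableau_exists[OF assms(6)] by blast
  obtain phi where
    homg: "\<forall>w\<in>specht_pair n m la mu. phi w \<in> homog n m d"
    and lin: "\<forall>x\<in>specht_pair n m la mu. \<forall>y\<in>specht_pair n m la mu. \<forall>a b.
          phi (\<lambda>z. a * x z + b * y z) = smult a (phi x) + smult b (phi y)"
    and eqv: "\<forall>g h. g permutes {..<n} \<and> h permutes {..<m} \<longrightarrow>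
          (\<forall>w\<in>specht_pair n m la mu. phi (wact g h w) - pact g h (phi w) \<in> JJ n m (rook_placements n m r) d)"
    and inj: "\<forall>w\<in>specht_pair n m la mu. phi w \<in> JJ n m (rook_placements n m r) d \<longrightarrow> w = (\<lambda>_. 0)"
    using assms(7) unfolding occurs_in_R_def Let_def JJ_def[symmetric] by blast
  show ?thesis
    using row_bound[OF assms(1,3,4,5) T U homg lin eqv inj]
      col_bound[OF assms(2,3,4,6) T U homg lin eqv inj] by simp
qed

end
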